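(* Let $q(t)=(r(t)R(\theta(t))a_1,r(t)R(\theta(t))a_2,r(t)R(\theta(t))a_3)$ be an elliptic relative equilibrium of the charged planar three-body system $m_i\ddot q_i=\sum_{j\ne i}\frac{m_im_j-e_ie_j}{|q_i-q_j|^3}(q_j-q_i)$, $i=1,2,3$, with $\delta_{ij}>0$ for $1\le i<j\le 3$, where $(a_1,a_2,a_3)$ is a non-collinear central configuration of the same charged three-body problem. Then the linearized system of this charged three-body system at $q$ can be transformed to the linearized system of the classical (Newtonian, uncharged) three-body problem at the elliptic equilateral triangle (Lagrangian) solution with the same eccentricity $e\in[0,1)$ and the same $\beta\in[0,9]$, where $\beta=\frac{36(m_1m_2\sin^2\theta_3+m_1m_3\sin^2\theta_2+m_2m_3\sin^2\theta_1)}{(m_1+m_2+m_3)^2}$.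
   Context: Charged planar three-body problem: point particles with masses $m_j>0$ and charges $e_j\in\mathbb{R}$, positions $q_j\in\mathbb{R}^2$, potential $U(q)=\sum_{i<j}\frac{m_im_j-e_ie_j}{|q_i-q_j|}$. Set $\delta_{ij}=1-\frac{e_i}{m_i}\frac{e_j}{m_j}$. $R(\theta)$ is the rotation matrix by angle $\theta$; $z(t)=r(t)(\cos\theta(t),\sin\theta(t))^T$ is a Keplerian orbit with eccentricity $e\in[0,1)$. $\theta_1,\theta_2,\theta_3$ are the inner angles of the triangle formed by the central configuration. *)

theory Defs
  imports "HOL-Analysis.Analysis"
begin

type_synonym conf = "real^2^3"

definition rot :: "real \<Rightarrow> real^2 \<Rightarrow> real^2" where
  "rot th x = vector [cos th * x$1 - sin th * x$2, sin th * x$1 + cos th * x$2]"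

text \<open>Acceleration field of the charged three-body problem:
  q_i'' = (1/m_i) sum_{j \<noteq> i} (m_i m_j - e_i e_j)/|q_i - q_j|^3 (q_j - q_i).
  Charges all zero gives the classical Newtonian problem.\<close>
definition force :: "real^3 \<Rightarrow> real^3 \<Rightarrow> conf \<Rightarrow> conf" where
  "force m e x = (\<chi> i. (1 / m$i) *\<^sub>R
      (\<Sum>j\<in>UNIV - {i}. ((m$i * m$j - e$i * e$j) / norm (x$j - x$i) ^ 3) *\<^sub>R (x$j - x$i)))"

definition delta :: "real^3 \<Rightarrow> real^3 \<Rightarrow> 3 \<Rightarrow> 3 \<Rightarrow> real" where
  "delta m e i j = 1 - (e$i / m$i) * (e$j / m$j)"

definition is_solution :: "real^3 \<Rightarrow> real^3 \<Rightarrow> (real \<Rightarrow> conf) \<Rightarrow> bool" where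
  "is_solution m e q \<longleftrightarrow> (\<exists>v. \<forall>t. (q has_vector_derivative v t) (at t) \<and>
       (v has_vector_derivative force m e (q t)) (at t))"

definition center_of_mass :: "real^3 \<Rightarrow> conf \<Rightarrow> real^2" where
  "center_of_mass m a = (1 / (\<Sum>i\<in>UNIV. m$i)) *\<^sub>R (\<Sum>i\<in>UNIV. m$i *\<^sub>R a$i)"

definition central_config :: "real^3 \<Rightarrow> real^3 \<Rightarrow> conf \<Rightarrow> bool" where
  "central_config m e a \<longleftrightarrow> (\<forall>i j. i \<noteq> j \<longrightarrow> a$i \<noteq> a$j) \<and>
     (\<exists>lam. \<forall>i. force m e a $ i = (- lam) *\<^sub>R (a$i - center_of_mass m a))"

text \<open>Keplerian orbit z'' = - mu z / |z|^3 (mu > 0) with eccentricity ecc, the latter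
  given by the length of the Laplace--Runge--Lenz vector divided by mu.\<close>
definition kepler_orbit :: "(real \<Rightarrow> real^2) \<Rightarrow> real \<Rightarrow> bool" where
  "kepler_orbit z ecc \<longleftrightarrow> (\<exists>mu v. mu > 0 \<and> (\<forall>t. z t \<noteq> 0 \<and>
      (z has_vector_derivative v t) (at t) \<and>
      (v has_vector_derivative (- (mu / norm (z t) ^ 3)) *\<^sub>R z t) (at t) \<and>
      (let L = (z t)$1 * (v t)$2 - (z t)$2 * (v t)$1;
           A = vector [(v t)$2 * L - mu * (z t)$1 / norm (z t),
                       - (v t)$1 * L - mu * (z t)$2 / norm (z t)] :: real^2
       in ecc = norm A / mu)))"

definition inner_angle :: "conf \<Rightarrow> 3 \<Rightarrow> 3 \<Rightarrow> 3 \<Rightarrow> real" where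
  "inner_angle a i j k = arccos (((a$j - a$i) \<bullet> (a$k - a$i)) / (norm (a$j - a$i) * norm (a$k - a$i)))"

definition beta :: "real^3 \<Rightarrow> conf \<Rightarrow> real" where
  "beta m a = 36 * (m$1 * m$2 * (sin (inner_angle a 3 1 2))^2
                  + m$1 * m$3 * (sin (inner_angle a 2 1 3))^2
                  + m$2 * m$3 * (sin (inner_angle a 1 2 3))^2) / (m$1 + m$2 + m$3)^2"

text \<open>Solutions Y = (xi, xi') of the first-order linearized system of q'' = F(q) along q:
  xi' = eta, eta' = DF(q(t)) xi.\<close>
definition lin_solution :: "real^3 \<Rightarrow> real^3 \<Rightarrow> (real \<Rightarrow> conf) \<Rightarrow> (real \<Rightarrow> conf \<times> conf) \<Rightarrow> bool" where
  "lin_solution m e q Y \<longleftrightarrow> (\<forall>t. (Y has_vector_derivative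
      (snd (Y t), frechet_derivative (force m e) (at (q t)) (fst (Y t)))) (at t))"

definition equilateral :: "conf \<Rightarrow> bool" where
  "equilateral a \<longleftrightarrow> norm (a$1 - a$2) > 0 \<and> norm (a$1 - a$2) = norm (a$2 - a$3)
     \<and> norm (a$2 - a$3) = norm (a$3 - a$1)"

end

theory Submission
  imports Defs "HOL-Analysis.Analysis"
begin


lemma has_derivative_vec_lambda_3:
  fixes f :: "3 \<Rightarrow> 'a::real_normed_vector \<Rightarrow> 'b::real_normed_vector"
  assumes "\<And>i. (f i has_derivative f' i) (at x)"
  shows "((\<lambda>x. \<chi> i. f i x) has_derivative (\<lambda>h. \<chi> i. f' i h)) (at x)"
proof -
  have e1: "(\<lambda>x. \<chi> i. f i x) = (\<lambda>x. \<Sum>i\<in>UNIV. axis i (f i x))"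
    by (rule ext) (simp add: vec_eq_iff axis_def sum_3 forall_3)
  have e2: "(\<lambda>h. \<chi> i. f' i h) = (\<lambda>h. \<Sum>i\<in>UNIV. axis i (f' i h))"
    by (rule ext) (simp add: vec_eq_iff axis_def sum_3 forall_3)
  have bl: "bounded_linear (axis i :: 'b \<Rightarrow> 'b^3)" for i
  proof (rule bounded_linear_intro[where K=1])
    show "axis i (x + y) = axis i x + axis i y" for x y :: 'b by (simp add: axis_def vec_eq_iff)
    show "axis i (r *\<^sub>R x) = r *\<^sub>R axis i x" for r and x :: 'b by (simp add: axis_def vec_eq_iff)
    show "norm (axis i x) \<le> norm x * 1" for x :: 'b
    proof -
      have "(\<Sum>j\<in>UNIV. (norm (axis i x $ j))^2) = (\<Sum>j\<in>UNIV. if j = i then (norm x)^2 else 0)"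
        by (rule sum.cong) (auto simp: axis_def)
      also have "\<dots> = (norm x)^2" by simp
      finally show ?thesis by (simp add: norm_vec_def L2_set_def)
    qed
  qed
  show ?thesis unfolding e1 e2
    by (rule has_derivative_sum) (rule bounded_linear.has_derivative[OF bl assms])
qed

lemma has_derivative_invcube:
  fixes y :: "'a::real_inner"
  assumes "y \<noteq> 0"
  shows "((\<lambda>y. (1 / norm y ^ 3) *\<^sub>R y) has_derivative
     (\<lambda>h. (1 / norm y ^ 3) *\<^sub>R h - (3 * (y \<bullet> h) / norm y ^ 5) *\<^sub>R y)) (at y)"
proof -
  have n: "norm y \<noteq> 0" using assms by simp
  have d: "((\<lambda>y. norm y) has_derivative (\<lambda>h. h \<bullet> sgn y)) (at y)"
    using has_derivative_norm[OF assms] by simp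
  show ?thesis
    apply (rule has_derivative_eq_rhs)
     apply (rule derivative_eq_intros d has_derivative_ident refl assms | simp add: n)+
    apply (rule ext)
    apply (simp add: sgn_div_norm inner_commute n)
    apply (rule disjI1)
    apply (simp add: field_simps n power_eq_if)
    done
qed

definition DFr :: "real^3 \<Rightarrow> real^3 \<Rightarrow> conf \<Rightarrow> conf \<Rightarrow> conf" where
  "DFr m e x h = (\<chi> i. (1 / m$i) *\<^sub>R (\<Sum>j\<in>UNIV - {i}. (m$i * m$j - e$i * e$j) *\<^sub>R
     ((1 / norm (x$j - x$i) ^ 3) *\<^sub>R (h$j - h$i) - (3 * ((x$j - x$i) \<bullet> (h$j - h$i)) / norm (x$j - x$i) ^ 5) *\<^sub>R (x$j - x$i))))"

lemma term_deriv:
  fixes x :: conf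
  assumes "x$j \<noteq> x$i"
  shows "((\<lambda>x. (1 / norm (x$j - x$i) ^ 3) *\<^sub>R (x$j - x$i)) has_derivative
    (\<lambda>h. (1 / norm (x$j - x$i) ^ 3) *\<^sub>R (h$j - h$i) - (3 * ((x$j - x$i) \<bullet> (h$j - h$i)) / norm (x$j - x$i) ^ 5) *\<^sub>R (x$j - x$i))) (at x)"
proof -
  have bl: "bounded_linear (\<lambda>x::conf. x$j - x$i)"
    by (intro bounded_linear_sub bounded_linear_vec_nth)
  have l: "((\<lambda>x::conf. x$j - x$i) has_derivative (\<lambda>h. h$j - h$i)) (at x)"
    by (rule bounded_linear_imp_has_derivative[OF bl])
  have "x$j - x$i \<noteq> 0" using assms by simp
  from has_derivative_compose[OF l has_derivative_invcube[OF this]] show ?thesis .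
qed

lemma force_deriv:
  assumes "\<forall>i j. i \<noteq> j \<longrightarrow> x$i \<noteq> x$j"
  shows "(force m e has_derivative DFr m e x) (at x)"
proof -
  have eq: "force m e = (\<lambda>x. \<chi> i. (1 / m$i) *\<^sub>R (\<Sum>j\<in>UNIV - {i}. (m$i * m$j - e$i * e$j) *\<^sub>R
     ((1 / norm (x$j - x$i) ^ 3) *\<^sub>R (x$j - x$i))))"
    by (rule ext) (simp add: force_def divide_inverse)
  show ?thesis unfolding eq DFr_def
    apply (rule has_derivative_vec_lambda_3)
    apply (rule has_derivative_scaleR_right)
    apply (rule has_derivative_sum)
    apply (rule has_derivative_scaleR_right)
    apply (rule term_deriv)
    using assms by auto
qed


lemma T1:
  fixes x y p q w t m1 m2 m3 :: complex
  assumes "x \<noteq> 0" "y \<noteq> 0" "w \<noteq> 0" "p \<noteq> 0" "q \<noteq> 0" "t \<noteq> 0" "m1 \<noteq> 0" "m2 \<noteq> 0" "m3 \<noteq> 0"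
   and wt: "w = x + y" "t = p + q"
  shows "m2 * (x/p) * ((-w)/m2 - y/m1) + m3 * (w/t) * (x/m3 - y/m1)
    = - (m1 * (q/y) + m2 * (t/w) + m3 * (p/x)) *
      ((x*y*w) / (p*q*t)) * (q/m1)"
proof -
  have "m2 * (x/p) * ((-w)/m2 - y/m1) + m3 * (w/t) * (x/m3 - y/m1) = 
     (m1*x*t*(-w) - m2*x*t*y + w*p*(m1*x) - w*p*(m3*y)) / (p*t*m1)"
    using assms(1-9) by (simp add: field_simps)
  also have "\<dots> = - (m1 * (q/y) + m2 * (t/w) + m3 * (p/x)) * ((x*y*w) / (p*q*t)) * (q/m1)"
    using assms(1-9) apply (simp add: field_simps) apply (simp only: wt) by algebra
  finally show ?thesis .
qed

definition SK :: "complex \<Rightarrow> complex \<Rightarrow> complex \<Rightarrow> real \<Rightarrow> real \<Rightarrow> real \<Rightarrow> complex" where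
  "SK A1 A2 A3 m1 m2 m3 = - (of_real m1 * (cnj(A3-A2)/(A3-A2)) + of_real m2 * (cnj(A1-A3)/(A1-A3)) + of_real m3 * (cnj(A2-A1)/(A2-A1))) *
      ((A2-A1)*(A3-A2)*(A1-A3) / (cnj(A2-A1)*cnj(A3-A2)*cnj(A1-A3)))"

lemma SK_rot: "SK A2 A3 A1 m2 m3 m1 = SK A1 A2 A3 m1 m2 m3"
  unfolding SK_def by (simp add: mult_ac add_ac)

lemma Kb1:
  fixes A1 A2 A3 :: complex and m1 m2 m3 :: real
  assumes "A1 \<noteq> A2" "A2 \<noteq> A3" "A1 \<noteq> A3" "m1 \<noteq> 0" "m2 \<noteq> 0" "m3 \<noteq> 0"
  shows "of_real m2 * ((A2-A1)/cnj(A2-A1)) * ((A1-A3)/of_real m2 - (A3-A2)/of_real m1)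
       + of_real m3 * ((A3-A1)/cnj(A3-A1)) * ((A2-A1)/of_real m3 - (A3-A2)/of_real m1)
     = SK A1 A2 A3 m1 m2 m3 * (cnj(A3-A2)/of_real m1)"
proof -
  have nz: "A2 - A1 \<noteq> 0" "A3 - A2 \<noteq> 0" "A3 - A1 \<noteq> 0" using assms by auto
  have e1: "A1-A3 = - (A3-A1)" by simp
  have e2: "cnj(A1-A3)/(A1-A3) = cnj(A3-A1)/(A3-A1)"
    by (metis complex_cnj_minus e1 minus_diff_eq minus_divide_divide)
  have e3: "(A2-A1)*(A3-A2)*(A1-A3)/(cnj(A2-A1)*cnj(A3-A2)*cnj(A1-A3)) = (A2-A1)*(A3-A2)*(A3-A1)/(cnj(A2-A1)*cnj(A3-A2)*cnj(A3-A1))"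
    by (metis (no_types, lifting) complex_cnj_minus e1 minus_divide_divide minus_mult_right)
  show ?thesis unfolding SK_def e2 e3
    apply (subst e1)
    apply (rule T1)
    using nz assms(4-6) by auto
qed


type_synonym cc = "3 \<Rightarrow> complex"

definition Msum :: "(3\<Rightarrow>real) \<Rightarrow> real" where "Msum mm = mm 1 + mm 2 + mm 3"
definition opL :: "(3\<Rightarrow>real) \<Rightarrow> cc \<Rightarrow> cc" where
  "opL mm H i = (\<Sum>j\<in>UNIV. of_real (mm j) * (H j - H i))"
definition opK :: "(3\<Rightarrow>real) \<Rightarrow> cc \<Rightarrow> cc \<Rightarrow> cc" where
  "opK mm a H i = (\<Sum>j\<in>UNIV. of_real (mm j) * ((a j - a i) / cnj (a j - a i)) * cnj (H j - H i))"
definition cen :: "(3\<Rightarrow>real) \<Rightarrow> cc \<Rightarrow> complex" where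
  "cen mm a = (\<Sum>i\<in>UNIV. of_real (mm i) * a i) / of_real (Msum mm)"
definition atc :: "(3\<Rightarrow>real) \<Rightarrow> cc \<Rightarrow> cc" where "atc mm a i = a i - cen mm a"
definition bv :: "(3\<Rightarrow>real) \<Rightarrow> cc \<Rightarrow> cc" where
  "bv mm a i = (if i = 1 then cnj (a 3 - a 2) / of_real (mm 1) else if i = 2 then cnj (a 1 - a 3) / of_real (mm 2)
     else cnj (a 2 - a 1) / of_real (mm 3))"
definition hip :: "(3\<Rightarrow>real) \<Rightarrow> cc \<Rightarrow> cc \<Rightarrow> complex" where
  "hip mm X Y = (\<Sum>i\<in>UNIV. of_real (mm i) * X i * cnj (Y i))"
definition comb :: "complex \<Rightarrow> complex \<Rightarrow> complex \<Rightarrow> cc \<Rightarrow> cc \<Rightarrow> cc" where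
  "comb x y w A B = (\<lambda>i. x + y * A i + w * B i)"
definition sK :: "(3\<Rightarrow>real) \<Rightarrow> cc \<Rightarrow> complex" where
  "sK mm a = SK (a 1) (a 2) (a 3) (mm 1) (mm 2) (mm 3)"

definition tri :: "(3\<Rightarrow>real) \<Rightarrow> cc \<Rightarrow> bool" where
  "tri mm a \<longleftrightarrow> (\<forall>i. mm i > 0) \<and> a 1 \<noteq> a 2 \<and> a 2 \<noteq> a 3 \<and> a 1 \<noteq> a 3"

lemma bv_simps: "bv mm a 1 = cnj (a 3 - a 2) / of_real (mm 1)" "bv mm a 2 = cnj (a 1 - a 3) / of_real (mm 2)"
  "bv mm a 3 = cnj (a 2 - a 1) / of_real (mm 3)"
  by (simp_all add: bv_def)

lemma tri_M: "tri mm a \<Longrightarrow> Msum mm > 0" "tri mm a \<Longrightarrow> mm i > 0"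
  unfolding tri_def Msum_def by (auto intro: add_pos_pos)

lemma opL_alt: "opL mm H i = (\<Sum>j\<in>UNIV. of_real (mm j) * H j) - of_real (Msum mm) * H i"
  unfolding opL_def Msum_def by (simp add: sum_3 algebra_simps)

lemma opL_comb: "opL mm (comb x y w A B) i = y * opL mm A i + w * opL mm B i"
  unfolding opL_def comb_def by (simp add: sum_3 algebra_simps)

lemma sum_conj_comb: fixes c A B :: "3 \<Rightarrow> complex" shows "(\<Sum>j\<in>UNIV. (c j :: complex) * cnj (x + y * A j + w * B j - (x + y * A i + w * B i))) =
  cnj y * (\<Sum>j\<in>UNIV. c j * cnj (A j - A i)) + cnj w * (\<Sum>j\<in>UNIV. c j * cnj (B j - B i))"
  unfolding sum_3 by (simp add: algebra_simps)

lemma opK_comb: "opK mm a (comb x y w A B) i = cnj y * opK mm a A i + cnj w * opK mm a B i"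
  unfolding opK_def comb_def
  using sum_conj_comb[of "\<lambda>j. of_real (mm j) * ((a j - a i) / cnj (a j - a i))" x y A w B i]
  by (simp add: mult.assoc)

lemma sum_at: "tri mm a \<Longrightarrow> (\<Sum>i\<in>UNIV. of_real (mm i) * atc mm a i) = 0"
proof -
  assume t: "tri mm a"
  then have "Msum mm \<noteq> 0" using tri_M(1)[OF t] by simp
  then have nz: "complex_of_real (Msum mm) \<noteq> 0" by simp
  have "(\<Sum>i\<in>UNIV. of_real (mm i) * atc mm a i) = (\<Sum>i\<in>UNIV. of_real (mm i) * a i) - of_real (Msum mm) * cen mm a"
    unfolding atc_def sum_3 Msum_def by (simp add: algebra_simps)
  also have "\<dots> = 0" unfolding cen_def using nz by simp
  finally show ?thesis .
qed

lemma sum_bv: "tri mm a \<Longrightarrow> (\<Sum>i\<in>UNIV. of_real (mm i) * bv mm a i) = 0"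
proof -
  assume t: "tri mm a"
  then have "mm i \<noteq> 0" for i using tri_M(2)[OF t] by (metis less_irrefl)
  then show ?thesis by (simp add: sum_3 bv_simps)
qed

lemma opL_at: "tri mm a \<Longrightarrow> opL mm (atc mm a) i = - of_real (Msum mm) * atc mm a i"
  by (simp add: opL_alt sum_at)

lemma opL_bv: "tri mm a \<Longrightarrow> opL mm (bv mm a) i = - of_real (Msum mm) * bv mm a i"
  by (simp add: opL_alt sum_bv)

lemma div_cnj_mult: "(x::complex) / cnj x * cnj x = x"
  by (cases "x = 0") auto

lemma opK_at: "tri mm a \<Longrightarrow> opK mm a (atc mm a) i = - of_real (Msum mm) * atc mm a i"
proof -
  assume t: "tri mm a"
  have "opK mm a (atc mm a) i = (\<Sum>j\<in>UNIV. of_real (mm j) * (a j - a i))"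
    unfolding opK_def atc_def
  proof (rule sum.cong)
    fix j
    have "of_real (mm j) * ((a j - a i) / cnj (a j - a i)) * cnj (a j - cen mm a - (a i - cen mm a))
       = of_real (mm j) * ((a j - a i) / cnj (a j - a i) * cnj (a j - a i))" by simp
    then show "of_real (mm j) * ((a j - a i) / cnj (a j - a i)) * cnj (a j - cen mm a - (a i - cen mm a))
       = of_real (mm j) * (a j - a i)" by (simp only: div_cnj_mult)
  qed simp
  also have "\<dots> = opL mm a i" unfolding opL_def ..
  also have "\<dots> = opL mm (atc mm a) i" unfolding opL_def atc_def by simp
  finally show ?thesis using opL_at[OF t] by simp
qed

lemma opK_bv: "tri mm a \<Longrightarrow> opK mm a (bv mm a) i = sK mm a * bv mm a i"
proof -
  assume t: "tri mm a"
  then have m: "mm 1 \<noteq> 0" "mm 2 \<noteq> 0" "mm 3 \<noteq> 0" using tri_M(2)[OF t] by (metis less_irrefl)+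
  have d: "a 1 \<noteq> a 2" "a 2 \<noteq> a 3" "a 1 \<noteq> a 3" using t unfolding tri_def by auto
  have c1: "opK mm a (bv mm a) 1 = sK mm a * bv mm a 1"
  proof -
    have "opK mm a (bv mm a) 1 = of_real (mm 2) * ((a 2 - a 1)/cnj(a 2 - a 1)) * ((a 1 - a 3)/of_real (mm 2) - (a 3 - a 2)/of_real (mm 1))
       + of_real (mm 3) * ((a 3 - a 1)/cnj(a 3 - a 1)) * ((a 2 - a 1)/of_real (mm 3) - (a 3 - a 2)/of_real (mm 1))"
      unfolding opK_def sum_3 bv_simps by simp
    also have "\<dots> = sK mm a * bv mm a 1"
      unfolding sK_def bv_simps by (rule Kb1) (use d m in auto)
    finally show ?thesis .
  qed
  have c2: "opK mm a (bv mm a) 2 = sK mm a * bv mm a 2"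
  proof -
    have "opK mm a (bv mm a) 2 = of_real (mm 3) * ((a 3 - a 2)/cnj(a 3 - a 2)) * ((a 2 - a 1)/of_real (mm 3) - (a 1 - a 3)/of_real (mm 2))
       + of_real (mm 1) * ((a 1 - a 2)/cnj(a 1 - a 2)) * ((a 3 - a 2)/of_real (mm 1) - (a 1 - a 3)/of_real (mm 2))"
      unfolding opK_def sum_3 bv_simps by simp
    also have "\<dots> = SK (a 2) (a 3) (a 1) (mm 2) (mm 3) (mm 1) * bv mm a 2"
      unfolding bv_simps by (rule Kb1) (use d m in auto)
    also have "SK (a 2) (a 3) (a 1) (mm 2) (mm 3) (mm 1) = sK mm a" unfolding sK_def by (rule SK_rot)
    finally show ?thesis .
  qed
  have c3: "opK mm a (bv mm a) 3 = sK mm a * bv mm a 3"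
  proof -
    have "opK mm a (bv mm a) 3 = of_real (mm 1) * ((a 1 - a 3)/cnj(a 1 - a 3)) * ((a 3 - a 2)/of_real (mm 1) - (a 2 - a 1)/of_real (mm 3))
       + of_real (mm 2) * ((a 2 - a 3)/cnj(a 2 - a 3)) * ((a 1 - a 3)/of_real (mm 2) - (a 2 - a 1)/of_real (mm 3))"
      unfolding opK_def sum_3 bv_simps by (simp add: add.commute)
    also have "\<dots> = SK (a 3) (a 1) (a 2) (mm 3) (mm 1) (mm 2) * bv mm a 3"
      unfolding bv_simps by (rule Kb1) (use d m in auto)
    also have "SK (a 3) (a 1) (a 2) (mm 3) (mm 1) (mm 2) = sK mm a" unfolding sK_def by (metis SK_rot)
    finally show ?thesis .
  qed
  show ?thesis using c1 c2 c3 exhaust_3[of i] by auto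
qed


lemma cns: "(complex_of_real (cmod z))^2 = z * cnj z"
  by (metis complex_norm_square of_real_power)

definition one3 :: cc where "one3 = (\<lambda>i. 1)"

lemma hip_comb: "hip mm (comb x y w A B) C = x * hip mm one3 C + y * hip mm A C + w * hip mm B C"
  unfolding hip_def comb_def one3_def sum_3 by (simp add: algebra_simps)

lemma hip_diff: "hip mm (\<lambda>i. X i - Y i) C = hip mm X C - hip mm Y C"
  unfolding hip_def sum_3 by (simp add: algebra_simps)

lemma hip_cnj_sym: "hip mm X Y = cnj (hip mm Y X)"
  unfolding hip_def sum_3 by (simp add: algebra_simps)

lemma hip_one_one: "hip mm one3 one3 = of_real (Msum mm)"
  unfolding hip_def one3_def sum_3 Msum_def by simp

lemma hip_at_one: "tri mm a \<Longrightarrow> hip mm (atc mm a) one3 = 0"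
  using sum_at unfolding hip_def one3_def by simp
lemma hip_bv_one: "tri mm a \<Longrightarrow> hip mm (bv mm a) one3 = 0"
  using sum_bv unfolding hip_def one3_def by simp
lemma hip_one_at: "tri mm a \<Longrightarrow> hip mm one3 (atc mm a) = 0"
  by (metis complex_cnj_zero hip_at_one hip_cnj_sym)
lemma hip_one_bv: "tri mm a \<Longrightarrow> hip mm one3 (bv mm a) = 0"
  by (metis complex_cnj_zero hip_bv_one hip_cnj_sym)

lemma hip_at_bv: "tri mm a \<Longrightarrow> hip mm (atc mm a) (bv mm a) = 0"
proof -
  assume t: "tri mm a"
  then have "mm i \<noteq> 0" for i using tri_M(2)[OF t] by (metis less_irrefl)
  then show ?thesis unfolding hip_def sum_3 bv_simps atc_def
    by (simp add: field_simps)
qed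
lemma hip_bv_at: "tri mm a \<Longrightarrow> hip mm (bv mm a) (atc mm a) = 0"
  by (metis complex_cnj_zero hip_at_bv hip_cnj_sym)

lemma hip_self: "hip mm X X = of_real (\<Sum>i\<in>UNIV. mm i * (cmod (X i))\<^sup>2)"
  unfolding hip_def by (simp add: mult.assoc flip: complex_norm_square)

lemma hip_self_nz: assumes "tri mm a" "X k \<noteq> 0" shows "hip mm X X \<noteq> 0"
proof -
  have p: "mm i > 0" for i using tri_M(2)[OF assms(1)] .
  have "(\<Sum>i\<in>UNIV. mm i * (cmod (X i))\<^sup>2) > 0"
  proof (rule sum_pos2[of UNIV k])
    show "mm k * (cmod (X k))\<^sup>2 > 0" using p[of k] assms(2) by simp
    show "0 \<le> mm i * (cmod (X i))\<^sup>2" for i using p[of i] by simp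
  qed auto
  then have "complex_of_real (\<Sum>i\<in>UNIV. mm i * (cmod (X i))\<^sup>2) \<noteq> 0" by (simp only: of_real_eq_0_iff)
  then show ?thesis unfolding hip_self .
qed

lemma hip_at_nz: "tri mm a \<Longrightarrow> hip mm (atc mm a) (atc mm a) \<noteq> 0"
proof -
  assume t: "tri mm a"
  then have "a 1 \<noteq> a 2" unfolding tri_def by auto
  then have "atc mm a 1 \<noteq> 0 \<or> atc mm a 2 \<noteq> 0" unfolding atc_def by auto
  then show ?thesis using hip_self_nz[OF t] by blast
qed

lemma hip_bv_nz: "tri mm a \<Longrightarrow> hip mm (bv mm a) (bv mm a) \<noteq> 0"
proof -
  assume t: "tri mm a"
  then have "a 2 \<noteq> a 3" "mm 1 > 0" unfolding tri_def by auto
  then have "bv mm a 1 \<noteq> 0" unfolding bv_simps by simp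
  then show ?thesis using hip_self_nz[OF t] by blast
qed

definition cA :: "(3\<Rightarrow>real) \<Rightarrow> cc \<Rightarrow> complex" where "cA mm H = hip mm H one3 / of_real (Msum mm)"
definition cB :: "(3\<Rightarrow>real) \<Rightarrow> cc \<Rightarrow> cc \<Rightarrow> complex" where
  "cB mm a H = hip mm H (atc mm a) / hip mm (atc mm a) (atc mm a)"
definition cG :: "(3\<Rightarrow>real) \<Rightarrow> cc \<Rightarrow> cc \<Rightarrow> complex" where
  "cG mm a H = hip mm H (bv mm a) / hip mm (bv mm a) (bv mm a)"

lemma coords:
  assumes "tri mm a"
  shows "cA mm (comb x y w (atc mm a) (bv mm a)) = x"
    "cB mm a (comb x y w (atc mm a) (bv mm a)) = y"
    "cG mm a (comb x y w (atc mm a) (bv mm a)) = w"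
proof -
  have "Msum mm \<noteq> 0" using tri_M(1)[OF assms] by simp
  then show "cA mm (comb x y w (atc mm a) (bv mm a)) = x"
    unfolding cA_def hip_comb using assms by (simp add: hip_one_one hip_at_one hip_bv_one)
  show "cB mm a (comb x y w (atc mm a) (bv mm a)) = y"
    unfolding cB_def hip_comb using assms by (simp add: hip_one_at hip_bv_at hip_at_nz)
  show "cG mm a (comb x y w (atc mm a) (bv mm a)) = w"
    unfolding cG_def hip_comb using assms by (simp add: hip_one_bv hip_at_bv hip_bv_nz)
qed

lemma orth_zero:
  assumes t: "tri mm a" and h1: "hip mm R one3 = 0" and h2: "hip mm R (atc mm a) = 0"
    and h3: "hip mm R (bv mm a) = 0"
  shows "R = (\<lambda>i. 0)"
proof -
  have p: "mm i > 0" for i using tri_M(2)[OF t] .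
  have d: "a 1 \<noteq> a 2" "a 2 \<noteq> a 3" "a 1 \<noteq> a 3" using t unfolding tri_def by auto
  define v where "v i = of_real (mm i) * R i" for i
  define D1 where "D1 = cnj (a 3 - a 2)"
  define D2 where "D2 = cnj (a 1 - a 3)"
  define D3 where "D3 = cnj (a 2 - a 1)"
  have D1nz: "D1 \<noteq> 0" using d unfolding D1_def by simp
  have s1: "v 1 + v 2 + v 3 = 0" using h1 unfolding hip_def one3_def sum_3 v_def by simp
  have "hip mm R (atc mm a) = (v 1 * cnj (a 1) + v 2 * cnj (a 2) + v 3 * cnj (a 3)) - (v 1 + v 2 + v 3) * cnj (cen mm a)"
    unfolding hip_def sum_3 v_def atc_def by (simp add: algebra_simps)
  then have s2: "v 1 * cnj (a 1) + v 2 * cnj (a 2) + v 3 * cnj (a 3) = 0" using h2 s1 by simp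
  define lam where "lam = v 1 / D1"
  have v1: "v 1 = lam * D1" unfolding lam_def using D1nz by simp
  have v3: "v 3 = - v 1 - v 2" using s1 by algebra
  have "v 1 * D2 = v 2 * D1" using s2 unfolding v3 D1_def D2_def by (simp add: algebra_simps)
  then have v2: "v 2 = lam * D2" unfolding lam_def using D1nz by (simp add: field_simps)
  have v3': "v 3 = lam * D3" unfolding v3 v1 v2 D1_def D2_def D3_def by (simp add: algebra_simps)
  have "hip mm R (bv mm a) = lam * of_real ((cmod D1)^2 / mm 1 + (cmod D2)^2 / mm 2 + (cmod D3)^2 / mm 3)"
  proof -
    have "hip mm R (bv mm a) = v 1 * cnj (bv mm a 1) + v 2 * cnj (bv mm a 2) + v 3 * cnj (bv mm a 3)"
      unfolding hip_def sum_3 v_def by (simp add: algebra_simps)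
    also have "\<dots> = lam * (D1 * cnj D1 / of_real (mm 1) + D2 * cnj D2 / of_real (mm 2) + D3 * cnj D3 / of_real (mm 3))"
      unfolding v1 v2 v3' bv_simps D1_def D2_def D3_def using p[of 1] p[of 2] p[of 3] by (simp add: field_simps; algebra?)
    finally show ?thesis by (simp add: cns)
  qed
  moreover have "(cmod D1)^2 / mm 1 + (cmod D2)^2 / mm 2 + (cmod D3)^2 / mm 3 > 0"
    using D1nz p[of 1] p[of 2] p[of 3] by (intro add_pos_nonneg) auto
  ultimately have "lam = 0" using h3 by (metis mult_eq_0_iff of_real_eq_0_iff less_irrefl)
  then have "v i = 0" for i using v1 v2 v3' exhaust_3[of i] by auto
  then show ?thesis using p unfolding v_def by (auto simp: fun_eq_iff) (metis less_irrefl)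
qed

lemma recon:
  assumes t: "tri mm a"
  shows "H = comb (cA mm H) (cB mm a H) (cG mm a H) (atc mm a) (bv mm a)"
proof -
  define C where "C = comb (cA mm H) (cB mm a H) (cG mm a H) (atc mm a) (bv mm a)"
  have M: "complex_of_real (Msum mm) \<noteq> 0" using tri_M(1)[OF t] by simp
  have e1: "hip mm C one3 = hip mm H one3"
    using coords(1)[OF t, of "cA mm H" "cB mm a H" "cG mm a H"] M unfolding C_def cA_def by simp
  have e2: "hip mm C (atc mm a) = hip mm H (atc mm a)"
    using coords(2)[OF t, of "cA mm H" "cB mm a H" "cG mm a H"] hip_at_nz[OF t] unfolding C_def cB_def by simp
  have e3: "hip mm C (bv mm a) = hip mm H (bv mm a)"
    using coords(3)[OF t, of "cA mm H" "cB mm a H" "cG mm a H"] hip_bv_nz[OF t] unfolding C_def cG_def by simp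
  have "(\<lambda>i. H i - C i) = (\<lambda>i. 0)"
    by (rule orth_zero[OF t]) (simp_all add: hip_diff e1 e2 e3)
  then show ?thesis unfolding C_def[symmetric] by (simp add: fun_eq_iff)
qed

definition op :: "(3\<Rightarrow>real) \<Rightarrow> cc \<Rightarrow> complex \<Rightarrow> cc \<Rightarrow> cc" where
  "op mm a \<omega> H = (\<lambda>i. - (1/2) * opL mm H i - (3/2) * \<omega> * opK mm a H i)"

lemma op_comb:
  assumes t: "tri mm a"
  shows "op mm a \<omega> (comb x y w (atc mm a) (bv mm a)) =
    comb 0 (of_real (Msum mm) / 2 * y + 3/2 * \<omega> * of_real (Msum mm) * cnj y)
           (of_real (Msum mm) / 2 * w - 3/2 * \<omega> * cnj w * sK mm a) (atc mm a) (bv mm a)"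
  unfolding op_def opL_comb opK_comb opL_at[OF t] opL_bv[OF t] opK_at[OF t] opK_bv[OF t]
  by (simp add: comb_def fun_eq_iff algebra_simps)

definition Amap :: "(3\<Rightarrow>real) \<Rightarrow> cc \<Rightarrow> (3\<Rightarrow>real) \<Rightarrow> cc \<Rightarrow> complex \<Rightarrow> cc \<Rightarrow> cc" where
  "Amap mm a mm' a' t H = comb (cA mm H) (cB mm a H) (t * cG mm a H) (atc mm' a') (bv mm' a')"

lemma Amap_comb:
  assumes "tri mm a"
  shows "Amap mm a mm' a' t (comb x y w (atc mm a) (bv mm a)) = comb x y (t * w) (atc mm' a') (bv mm' a')"
  unfolding Amap_def coords[OF assms] ..

lemma intertwine:
  assumes t: "tri mm a" and t': "tri mm' a'" and M: "Msum mm' = Msum mm"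
    and s: "tt * sK mm a = cnj tt * sK mm' a'"
  shows "Amap mm a mm' a' tt (op mm a \<omega> H) = op mm' a' \<omega> (Amap mm a mm' a' tt H)"
proof -
  have "Amap mm a mm' a' tt (op mm a \<omega> H) = Amap mm a mm' a' tt (op mm a \<omega> (comb (cA mm H) (cB mm a H) (cG mm a H) (atc mm a) (bv mm a)))"
    using recon[OF t, of H] by simp
  also have "\<dots> = op mm' a' \<omega> (Amap mm a mm' a' tt H)"
  proof -
    have r: "Amap mm a mm' a' tt H = comb (cA mm H) (cB mm a H) (tt * cG mm a H) (atc mm' a') (bv mm' a')"
      unfolding Amap_def ..
    have "tt * (of_real (Msum mm) / 2 * cG mm a H - 3/2 * \<omega> * cnj (cG mm a H) * sK mm a)
       = of_real (Msum mm) / 2 * (tt * cG mm a H) - 3/2 * \<omega> * cnj (tt * cG mm a H) * sK mm' a'"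
      using s by (simp add: algebra_simps)
    then show ?thesis
      unfolding op_comb[OF t] Amap_comb[OF t] r op_comb[OF t'] M by simp
  qed
  finally show ?thesis .
qed

lemma Amap_inv:
  assumes t: "tri mm a" and t': "tri mm' a'" and nz: "tt \<noteq> 0"
  shows "Amap mm' a' mm a (1/tt) (Amap mm a mm' a' tt H) = H"
proof -
  have "Amap mm' a' mm a (1/tt) (Amap mm a mm' a' tt H) = comb (cA mm H) (cB mm a H) (cG mm a H) (atc mm a) (bv mm a)"
    unfolding Amap_def[of mm a] Amap_comb[OF t'] using nz by simp
  also have "\<dots> = H" using recon[OF t] by simp
  finally show ?thesis .
qed

lemma hip_add: "hip mm (\<lambda>i. X i + Y i) C = hip mm X C + hip mm Y C"
  unfolding hip_def sum_3 by (simp add: algebra_simps)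
lemma hip_scale: "hip mm (\<lambda>i. c * X i) C = c * hip mm X C"
  unfolding hip_def sum_3 by (simp add: algebra_simps)

lemma Amap_add: "Amap mm a mm' a' tt (\<lambda>i. X i + Y i) = (\<lambda>i. Amap mm a mm' a' tt X i + Amap mm a mm' a' tt Y i)"
  unfolding Amap_def comb_def cA_def cB_def cG_def hip_add by (simp add: fun_eq_iff algebra_simps add_divide_distrib)
lemma Amap_scale: "Amap mm a mm' a' tt (\<lambda>i. c * X i) = (\<lambda>i. c * Amap mm a mm' a' tt X i)"
  unfolding Amap_def comb_def cA_def cB_def cG_def hip_scale by (simp add: fun_eq_iff algebra_simps)


definition cv :: "real^2 \<Rightarrow> complex" where "cv x = Complex (x$1) (x$2)"
definition vc :: "complex \<Rightarrow> real^2" where "vc z = vector [Re z, Im z]"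

lemma vc_cv[simp]: "vc (cv x) = x"
  unfolding vc_def cv_def by (simp add: vec_eq_iff forall_2)
lemma cv_vc[simp]: "cv (vc z) = z"
  unfolding vc_def cv_def by (simp add: complex_eq_iff)
lemma cv_add: "cv (x + y) = cv x + cv y" unfolding cv_def by (simp add: complex_eq_iff)
lemma cv_diff: "cv (x - y) = cv x - cv y" unfolding cv_def by (simp add: complex_eq_iff)
lemma cv_scaleR: "cv (c *\<^sub>R x) = of_real c * cv x" unfolding cv_def by (simp add: complex_eq_iff)
lemma cv_zero: "cv 0 = 0" unfolding cv_def by (simp add: complex_eq_iff)
lemma cv_eq_iff: "cv x = cv y \<longleftrightarrow> x = y" by (metis vc_cv)
lemma norm_cv: "cmod (cv x) = norm x"
  unfolding cv_def cmod_def norm_vec_def L2_set_def sum_2 by (simp add: power2_eq_square)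
lemma inner_cv: "x \<bullet> y = Re (cnj (cv x) * cv y)"
  unfolding cv_def inner_vec_def sum_2 by simp
lemma cv_rot: "cv (rot th x) = cis th * cv x"
  unfolding cv_def rot_def by (simp add: complex_eq_iff)

definition CV :: "conf \<Rightarrow> cc" where "CV x = (\<lambda>i. cv (x$i))"
definition VC :: "cc \<Rightarrow> conf" where "VC H = (\<chi> i. vc (H i))"
lemma VC_CV[simp]: "VC (CV x) = x" unfolding VC_def CV_def by (simp add: vec_eq_iff)
lemma CV_VC[simp]: "CV (VC H) = H" unfolding VC_def CV_def by (simp add: fun_eq_iff)
lemma CV_inj: "CV x = CV y \<Longrightarrow> x = y" by (metis VC_CV)

lemma sum_minus_self:
  fixes f :: "3 \<Rightarrow> 'a::comm_monoid_add"
  assumes "f i = 0" shows "(\<Sum>j\<in>UNIV - {i}. f j) = (\<Sum>j\<in>UNIV. f j)"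
  by (rule sum.mono_neutral_left) (use assms in auto)

lemma bracket_cv:
  fixes d w :: "real^2"
  assumes "d \<noteq> 0"
  shows "cv ((1 / norm d ^ 3) *\<^sub>R w - (3 * (d \<bullet> w) / norm d ^ 5) *\<^sub>R d)
     = of_real (1 / norm d ^ 3) * (- cv w / 2 - 3/2 * (cv d / cnj (cv d)) * cnj (cv w))"
proof -
  define D where "D = cv d"
  define W where "W = cv w"
  have Dnz: "D \<noteq> 0" using assms unfolding D_def by (metis cv_zero cv_eq_iff)
  have n: "norm d = cmod D" unfolding D_def norm_cv ..
  have i: "d \<bullet> w = Re (cnj D * W)" unfolding D_def W_def inner_cv ..
  have nz: "cmod D \<noteq> 0" using Dnz by simp
  have c: "cnj D \<noteq> 0" using Dnz by simp
  have gen: "3 * R / N ^ 5 * D = 1 / N ^ 3 * (3/2 * W + 3/2 * (D / C) * Wc)"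
    if "N \<noteq> 0" "C \<noteq> 0" "N ^ 2 = D * C" "R = (C * W + D * Wc) / 2" "D \<noteq> 0" for N C R Wc :: complex
  proof -
    have "N ^ 5 = N ^ 3 * N ^ 2" by (simp add: eval_nat_numeral)
    then have n5: "N ^ 5 = N ^ 3 * (D * C)" using that(3) by simp
    have n3: "N ^ 3 \<noteq> 0" using that(1) by simp
    show ?thesis unfolding n5 that(4) using n3 that(2) that(5) by (simp add: field_simps)
  qed
  have key: "of_real (3 * Re (cnj D * W) / cmod D ^ 5) * D = of_real (1 / cmod D ^ 3) * (3/2 * W + 3/2 * (D / cnj D) * cnj W)"
  proof -
    have "of_real (Re (cnj D * W)) = (cnj D * W + D * cnj W) / 2"
      by (simp add: complex_eq_iff)
    moreover have "(complex_of_real (cmod D)) ^ 2 = D * cnj D" using cns[of D] by simp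
    ultimately show ?thesis using gen[of "of_real (cmod D)" "cnj D" "of_real (Re (cnj D * W))" "cnj W"] nz c Dnz
      by simp
  qed
  show ?thesis
    unfolding cv_diff cv_scaleR D_def[symmetric] W_def[symmetric] n i key
    by (simp add: algebra_simps)
qed

lemma cv_sum: "cv (sum f A) = (\<Sum>x\<in>A. cv (f x))"
  by (induction A rule: infinite_finite_induct) (auto simp: cv_zero cv_add)

definition kap_hyp :: "real^3 \<Rightarrow> real^3 \<Rightarrow> cc \<Rightarrow> real \<Rightarrow> bool" where
  "kap_hyp m e ac \<kappa> \<longleftrightarrow> (\<forall>i j. i \<noteq> j \<longrightarrow> m$i * m$j - e$i * e$j = m$i * m$j * \<kappa> * cmod (ac j - ac i) ^ 3)"

lemma cv_vc_diff: "cv (vc x - vc y) = x - y" by (simp add: cv_diff)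

lemma force_scaled:
  assumes z: "z \<noteq> 0" and m: "\<forall>i. m$i > 0" and kh: "kap_hyp m e ac \<kappa>"
  shows "CV (force m e (VC (\<lambda>i. z * ac i))) = (\<lambda>i. of_real (\<kappa> / cmod z ^ 3) * z * opL (\<lambda>i. m$i) ac i)"
proof (rule ext)
  fix i
  have "CV (force m e (VC (\<lambda>i. z * ac i))) i =
     (\<Sum>j\<in>UNIV - {i}. of_real (1 / m$i) * (of_real ((m$i * m$j - e$i * e$j) / cmod (z * ac j - z * ac i) ^ 3) * (z * ac j - z * ac i)))"
    unfolding CV_def force_def VC_def by (simp add: cv_scaleR cv_sum sum_distrib_left cv_vc_diff norm_cv[symmetric])
  also have "\<dots> = (\<Sum>j\<in>UNIV - {i}. of_real (\<kappa> / cmod z ^ 3) * z * (of_real (m$j) * (ac j - ac i)))"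
  proof (rule sum.cong)
    fix j assume "j \<in> UNIV - {i}"
    then have ij: "i \<noteq> j" by auto
    have mi: "m$i \<noteq> 0" using m by (metis less_irrefl)
    show "of_real (1 / m$i) * (of_real ((m$i * m$j - e$i * e$j) / cmod (z * ac j - z * ac i) ^ 3) * (z * ac j - z * ac i)) =
      of_real (\<kappa> / cmod z ^ 3) * z * (of_real (m$j) * (ac j - ac i))"
    proof (cases "ac j = ac i")
      case True then show ?thesis by simp
    next
      case False
      have "cmod (z * ac j - z * ac i) = cmod z * cmod (ac j - ac i)"
        by (metis norm_mult right_diff_distrib)
      moreover have k: "m$i * m$j - e$i * e$j = m$i * m$j * \<kappa> * cmod (ac j - ac i) ^ 3"
        using kh ij unfolding kap_hyp_def by blast
      ultimately show ?thesis unfolding k using mi z False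
        by (simp add: field_simps power_mult_distrib)
    qed
  qed simp
  also have "\<dots> = of_real (\<kappa> / cmod z ^ 3) * z * opL (\<lambda>i. m$i) ac i"
    unfolding opL_def sum_distrib_left[symmetric]
    by (subst sum_minus_self) simp_all
  finally show "CV (force m e (VC (\<lambda>i. z * ac i))) i = of_real (\<kappa> / cmod z ^ 3) * z * opL (\<lambda>i. m$i) ac i" .
qed

lemma op_alt: "op mm a \<omega> H i = (\<Sum>j\<in>UNIV. of_real (mm j) * (- (H j - H i) / 2 - 3/2 * ((a j - a i) / cnj (a j - a i)) * \<omega> * cnj (H j - H i)))"
proof -
  have g: "- (1/2) * (\<Sum>j\<in>UNIV. c j * W j) - (3/2) * \<omega> * (\<Sum>j\<in>UNIV. c j * q j * cW j) =
     (\<Sum>j\<in>UNIV. c j * (- (W j) / 2 - 3/2 * q j * \<omega> * cW j))" for c W q cW :: "3 \<Rightarrow> complex"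
    unfolding sum_3 by (simp add: algebra_simps)
  show ?thesis unfolding op_def opL_def opK_def
    using g[of "\<lambda>j. of_real (mm j)" "\<lambda>j. H j - H i" "\<lambda>j. (a j - a i) / cnj (a j - a i)" "\<lambda>j. cnj (H j - H i)"]
    by simp
qed

lemma DFr_scaled:
  assumes z: "z \<noteq> 0" and m: "\<forall>i. m$i > 0" and kh: "kap_hyp m e ac \<kappa>"
    and dist: "\<forall>i j. i \<noteq> j \<longrightarrow> ac i \<noteq> ac j"
  shows "CV (DFr m e (VC (\<lambda>i. z * ac i)) h) = (\<lambda>i. of_real (\<kappa> / cmod z ^ 3) * op (\<lambda>i. m$i) ac (z / cnj z) (CV h) i)"
proof (rule ext)
  fix i
  have "CV (DFr m e (VC (\<lambda>i. z * ac i)) h) i =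
     (\<Sum>j\<in>UNIV - {i}. of_real (1 / m$i) * (of_real (m$i * m$j - e$i * e$j) *
        cv ((1 / norm (vc (z * ac j) - vc (z * ac i)) ^ 3) *\<^sub>R (h$j - h$i) -
          (3 * ((vc (z * ac j) - vc (z * ac i)) \<bullet> (h$j - h$i)) / norm (vc (z * ac j) - vc (z * ac i)) ^ 5) *\<^sub>R (vc (z * ac j) - vc (z * ac i)))))"
    unfolding CV_def DFr_def VC_def by (simp add: cv_scaleR cv_sum sum_distrib_left)
  also have "\<dots> = (\<Sum>j\<in>UNIV - {i}. of_real (\<kappa> / cmod z ^ 3) * (of_real (m$j) * (- (CV h j - CV h i) / 2 - 3/2 * ((ac j - ac i) / cnj (ac j - ac i)) * (z / cnj z) * cnj (CV h j - CV h i))))"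
  proof (rule sum.cong)
    fix j assume "j \<in> UNIV - {i}"
    then have ij: "i \<noteq> j" by auto
    have mi: "m$i \<noteq> 0" using m by (metis less_irrefl)
    have dnz: "ac j - ac i \<noteq> 0" using dist ij by auto
    define d where "d = vc (z * ac j) - vc (z * ac i)"
    have cd: "cv d = z * (ac j - ac i)" unfolding d_def cv_vc_diff by (simp add: algebra_simps)
    have dnz': "d \<noteq> 0" using cd z dnz by (metis cv_zero mult_eq_0_iff)
    have nd: "norm d = cmod z * cmod (ac j - ac i)" by (metis cd norm_cv norm_mult)
    have k: "m$i * m$j - e$i * e$j = m$i * m$j * \<kappa> * cmod (ac j - ac i) ^ 3"
      using kh ij unfolding kap_hyp_def by blast
    have r: "cv d / cnj (cv d) = (ac j - ac i) / cnj (ac j - ac i) * (z / cnj z)" unfolding cd by (simp add: mult.commute)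
    show "of_real (1 / m$i) * (of_real (m$i * m$j - e$i * e$j) *
        cv ((1 / norm (vc (z * ac j) - vc (z * ac i)) ^ 3) *\<^sub>R (h$j - h$i) -
          (3 * ((vc (z * ac j) - vc (z * ac i)) \<bullet> (h$j - h$i)) / norm (vc (z * ac j) - vc (z * ac i)) ^ 5) *\<^sub>R (vc (z * ac j) - vc (z * ac i))))
      = of_real (\<kappa> / cmod z ^ 3) * (of_real (m$j) * (- (CV h j - CV h i) / 2 - 3/2 * ((ac j - ac i) / cnj (ac j - ac i)) * (z / cnj z) * cnj (CV h j - CV h i)))"
      unfolding d_def[symmetric] bracket_cv[OF dnz']
      unfolding r nd k CV_def cv_diff
      using mi z dnz by (simp add: field_simps power_mult_distrib)
  qed simp
  also have "\<dots> = of_real (\<kappa> / cmod z ^ 3) * op (\<lambda>i. m$i) ac (z / cnj z) (CV h) i"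
    unfolding op_alt sum_distrib_left[symmetric]
    by (subst sum_minus_self) (simp_all add: mult.commute mult.left_commute)
  finally show "CV (DFr m e (VC (\<lambda>i. z * ac i)) h) i = of_real (\<kappa> / cmod z ^ 3) * op (\<lambda>i. m$i) ac (z / cnj z) (CV h) i" .
qed


definition sfun :: "complex \<Rightarrow> complex \<Rightarrow> real" where
  "sfun X Y = (Im (cnj X * Y))\<^sup>2 / (cmod (cnj X * Y))\<^sup>2"

lemma sin_sq_arccos: "w \<noteq> 0 \<Longrightarrow> (sin (arccos (Re w / cmod w)))\<^sup>2 = (Im w)\<^sup>2 / (cmod w)\<^sup>2"
proof -
  assume w: "w \<noteq> 0"
  then have c: "cmod w > 0" by simp
  have "\<bar>Re w\<bar> \<le> cmod w" by (rule abs_Re_le_cmod)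
  then have b: "- 1 \<le> Re w / cmod w" "Re w / cmod w \<le> 1" using c by (auto simp: field_simps abs_le_iff)
  have sq: "(Re w / cmod w)\<^sup>2 \<le> 1" using b by (simp add: abs_square_le_1 abs_le_iff)
  have "(sin (arccos (Re w / cmod w)))\<^sup>2 = 1 - (Re w / cmod w)\<^sup>2"
    using sin_arccos[OF b] sq by simp
  also have "\<dots> = (Im w)\<^sup>2 / (cmod w)\<^sup>2"
  proof -
    have "(cmod w)\<^sup>2 \<noteq> 0" using c by simp
    moreover have "(cmod w)\<^sup>2 = (Re w)\<^sup>2 + (Im w)\<^sup>2" by (rule cmod_power2)
    ultimately show ?thesis by (simp add: field_simps power_divide)
  qed
  finally show ?thesis .
qed

lemma sin_inner_angle:
  fixes a :: conf
  assumes "a$i \<noteq> a$k" "a$j \<noteq> a$k"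
  shows "(sin (inner_angle a k i j))\<^sup>2 = sfun (cv (a$i) - cv (a$k)) (cv (a$j) - cv (a$k))"
proof -
  define w where "w = cnj (cv (a$i) - cv (a$k)) * (cv (a$j) - cv (a$k))"
  have "cv (a$i) - cv (a$k) \<noteq> 0" "cv (a$j) - cv (a$k) \<noteq> 0" using assms cv_eq_iff by auto
  then have wnz: "w \<noteq> 0" unfolding w_def by simp
  have "(a$i - a$k) \<bullet> (a$j - a$k) = Re w" unfolding w_def inner_cv cv_diff ..
  moreover have "norm (a$i - a$k) * norm (a$j - a$k) = cmod w" unfolding w_def
    by (simp add: norm_mult norm_cv[symmetric] cv_diff del: complex_cnj_diff)
  ultimately have "inner_angle a k i j = arccos (Re w / cmod w)" unfolding inner_angle_def by simp
  then show ?thesis unfolding sfun_def w_def[symmetric] using sin_sq_arccos[OF wnz] by simp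
qed

lemma re_cnj_div: "w \<noteq> 0 \<Longrightarrow> Re (cnj w / w) = 1 - 2 * (Im w)\<^sup>2 / (cmod w)\<^sup>2"
proof -
  assume w: "w \<noteq> 0"
  then have c: "(Re w)\<^sup>2 + (Im w)\<^sup>2 \<noteq> 0" by (simp add: complex_eq_iff power2_eq_square)
  show ?thesis using c unfolding Re_divide cmod_power2 by (simp add: field_simps power2_eq_square)
qed

definition uu :: "complex \<Rightarrow> complex" where "uu X = X / cnj X"

lemma uu_pair: assumes "X \<noteq> 0" "Y \<noteq> 0"
  shows "Re (uu X * cnj (uu Y)) = 1 - 2 * sfun X Y"
proof -
  define w where "w = cnj X * Y"
  have "uu X * cnj (uu Y) = cnj w / w" unfolding uu_def w_def by (simp add: field_simps)
  moreover have "w \<noteq> 0" using assms unfolding w_def by simp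
  ultimately show ?thesis unfolding sfun_def w_def[symmetric] using re_cnj_div by simp
qed

lemma uu_unit: "X \<noteq> 0 \<Longrightarrow> uu X * cnj (uu X) = 1"
  unfolding uu_def by (simp add: field_simps)

lemma sfun_sym: "sfun X Y = sfun Y X"
proof -
  have e: "cnj Y * X = cnj (cnj X * Y)" by simp
  show ?thesis unfolding sfun_def e by (simp add: power2_commute norm_mult)
qed

lemma sfun_neg: "sfun X (- Y) = sfun X Y"
  unfolding sfun_def by (simp add: power2_commute)

lemma sum3_sq:
  fixes m1 m2 m3 :: real
  assumes "X1 \<noteq> 0" "X2 \<noteq> 0" "X3 \<noteq> 0"
  shows "(cmod (of_real m1 * uu X1 + of_real m2 * uu X2 + of_real m3 * uu X3))\<^sup>2 =
     (m1 + m2 + m3)\<^sup>2 - 4 * (m1 * m2 * sfun X1 X2 + m1 * m3 * sfun X1 X3 + m2 * m3 * sfun X2 X3)"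
proof -
  define S where "S = of_real m1 * uu X1 + of_real m2 * uu X2 + of_real m3 * uu X3"
  define p12 where "p12 = uu X1 * cnj (uu X2)"
  define p13 where "p13 = uu X1 * cnj (uu X3)"
  define p23 where "p23 = uu X2 * cnj (uu X3)"
  have "(cmod S)\<^sup>2 = Re (S * cnj S)" using cns[of S] by (metis Re_complex_of_real of_real_power)
  also have "S * cnj S = of_real (m1^2) * (uu X1 * cnj (uu X1)) + of_real (m2^2) * (uu X2 * cnj (uu X2)) + of_real (m3^2) * (uu X3 * cnj (uu X3))
     + of_real (m1*m2) * (p12 + cnj p12) + of_real (m1*m3) * (p13 + cnj p13) + of_real (m2*m3) * (p23 + cnj p23)"
    unfolding S_def p12_def p13_def p23_def by (simp add: algebra_simps power2_eq_square)
  also have "\<dots> = of_real (m1^2 + m2^2 + m3^2) + of_real (m1*m2) * (p12 + cnj p12) + of_real (m1*m3) * (p13 + cnj p13) + of_real (m2*m3) * (p23 + cnj p23)"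
    using uu_unit assms by simp
  also have "Re \<dots> = m1^2 + m2^2 + m3^2 + 2 * m1 * m2 * Re p12 + 2 * m1 * m3 * Re p13 + 2 * m2 * m3 * Re p23"
    by simp
  also have "\<dots> = (m1 + m2 + m3)\<^sup>2 - 4 * (m1 * m2 * sfun X1 X2 + m1 * m3 * sfun X1 X3 + m2 * m3 * sfun X2 X3)"
  proof -
    have r12: "Re p12 = 1 - 2 * sfun X1 X2" unfolding p12_def by (rule uu_pair) (use assms in auto)
    have r13: "Re p13 = 1 - 2 * sfun X1 X3" unfolding p13_def by (rule uu_pair) (use assms in auto)
    have r23: "Re p23 = 1 - 2 * sfun X2 X3" unfolding p23_def by (rule uu_pair) (use assms in auto)
    show ?thesis unfolding r12 r13 r23 by (simp add: power2_eq_square algebra_simps)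
  qed
  finally show ?thesis unfolding S_def .
qed


lemma cmod_sK: assumes "tri mm ac"
  shows "cmod (sK mm ac) = cmod (of_real (mm 1) * uu (ac 3 - ac 2) + of_real (mm 2) * uu (ac 1 - ac 3) + of_real (mm 3) * uu (ac 2 - ac 1))"
proof -
  have d: "ac 1 \<noteq> ac 2" "ac 2 \<noteq> ac 3" "ac 1 \<noteq> ac 3" using assms unfolding tri_def by auto
  define P where "P = (ac 2 - ac 1) * (ac 3 - ac 2) * (ac 1 - ac 3)"
  have Pnz: "P \<noteq> 0" using d unfolding P_def by auto
  define S where "S = of_real (mm 1) * uu (ac 3 - ac 2) + of_real (mm 2) * uu (ac 1 - ac 3) + of_real (mm 3) * uu (ac 2 - ac 1)"
  have "sK mm ac = - cnj S * (P / cnj P)"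
    unfolding sK_def SK_def uu_def P_def S_def by simp
  moreover have "cmod (P / cnj P) = 1" using Pnz by (simp add: norm_divide)
  ultimately have "cmod (sK mm ac) = cmod S" by (simp only: norm_mult norm_minus_cancel complex_mod_cnj)
  then show ?thesis unfolding S_def .
qed

lemma sfun_negl: "sfun (- X) Y = sfun X Y" by (metis sfun_neg sfun_sym)

lemma sfun_nonneg: "sfun X Y \<ge> 0" unfolding sfun_def by simp

lemma sfun_pos: "Im (cnj X * Y) \<noteq> 0 \<Longrightarrow> sfun X Y > 0"
  unfolding sfun_def by (auto intro!: divide_pos_pos)

lemma beta_eq:
  fixes m :: "real^3" and a :: conf
  assumes t: "tri (\<lambda>i. m$i) (CV a)"
  shows "beta m a = 36 * (m$1 * m$2 * sfun (CV a 3 - CV a 2) (CV a 1 - CV a 3) + m$1 * m$3 * sfun (CV a 3 - CV a 2) (CV a 2 - CV a 1)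
       + m$2 * m$3 * sfun (CV a 1 - CV a 3) (CV a 2 - CV a 1)) / (m$1 + m$2 + m$3)^2"
proof -
  have d: "a$1 \<noteq> a$2" "a$2 \<noteq> a$3" "a$1 \<noteq> a$3" using t unfolding tri_def CV_def by auto
  have s3: "(sin (inner_angle a 3 1 2))\<^sup>2 = sfun (CV a 3 - CV a 2) (CV a 1 - CV a 3)"
  proof -
    have "(sin (inner_angle a 3 1 2))\<^sup>2 = sfun (CV a 1 - CV a 3) (CV a 2 - CV a 3)"
      using sin_inner_angle[of a 1 3 2] d unfolding CV_def by auto
    also have "CV a 2 - CV a 3 = - (CV a 3 - CV a 2)" by simp
    finally show ?thesis by (simp only: sfun_neg sfun_sym)
  qed
  have s2: "(sin (inner_angle a 2 1 3))\<^sup>2 = sfun (CV a 3 - CV a 2) (CV a 2 - CV a 1)"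
  proof -
    have "(sin (inner_angle a 2 1 3))\<^sup>2 = sfun (CV a 1 - CV a 2) (CV a 3 - CV a 2)"
      using sin_inner_angle[of a 1 2 3] d unfolding CV_def by auto
    also have "CV a 1 - CV a 2 = - (CV a 2 - CV a 1)" by simp
    finally show ?thesis by (simp only: sfun_negl sfun_sym)
  qed
  have s1: "(sin (inner_angle a 1 2 3))\<^sup>2 = sfun (CV a 1 - CV a 3) (CV a 2 - CV a 1)"
  proof -
    have "(sin (inner_angle a 1 2 3))\<^sup>2 = sfun (CV a 2 - CV a 1) (CV a 3 - CV a 1)"
      using sin_inner_angle[of a 2 1 3] d unfolding CV_def by auto
    also have "CV a 3 - CV a 1 = - (CV a 1 - CV a 3)" by simp
    finally show ?thesis by (simp only: sfun_neg sfun_sym)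
  qed
  show ?thesis unfolding beta_def s1 s2 s3 ..
qed

lemma beta_sK:
  fixes m :: "real^3" and a :: conf
  assumes t: "tri (\<lambda>i. m$i) (CV a)"
  shows "beta m a = 9 * ((Msum (\<lambda>i. m$i))\<^sup>2 - (cmod (sK (\<lambda>i. m$i) (CV a)))\<^sup>2) / (Msum (\<lambda>i. m$i))\<^sup>2"
proof -
  have d: "CV a 1 \<noteq> CV a 2" "CV a 2 \<noteq> CV a 3" "CV a 1 \<noteq> CV a 3" using t unfolding tri_def by auto
  have "(cmod (sK (\<lambda>i. m$i) (CV a)))\<^sup>2 = (m$1 + m$2 + m$3)\<^sup>2 - 4 * (m$1 * m$2 * sfun (CV a 3 - CV a 2) (CV a 1 - CV a 3) + m$1 * m$3 * sfun (CV a 3 - CV a 2) (CV a 2 - CV a 1)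
       + m$2 * m$3 * sfun (CV a 1 - CV a 3) (CV a 2 - CV a 1))"
    unfolding cmod_sK[OF t] by (rule sum3_sq) (use d in auto)
  then show ?thesis unfolding beta_eq[OF t] Msum_def by (simp add: field_simps)
qed


lemma t3: "UNIV - {1::3} = {2,3}" "UNIV - {2::3} = {1,3}" "UNIV - {3::3} = {1,2}"
  "(1::3) \<noteq> 2" "(1::3) \<noteq> 3" "(2::3) \<noteq> 3"
  unfolding UNIV_3 by auto

lemma sum_minus_1: "(\<Sum>j\<in>UNIV - {1::3}. f j) = f 2 + f 3" unfolding t3 by (simp add: t3)
lemma sum_minus_2: "(\<Sum>j\<in>UNIV - {2::3}. f j) = f 1 + f 3" unfolding t3 by (simp add: t3)
lemma sum_minus_3: "(\<Sum>j\<in>UNIV - {3::3}. f j) = f 1 + f 2" unfolding t3 by (simp add: t3)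

lemma CV_force: "CV (force m e x) i = (\<Sum>j\<in>UNIV - {i}. of_real (1 / m$i * ((m$i * m$j - e$i * e$j) / cmod (CV x j - CV x i) ^ 3)) * (CV x j - CV x i))"
  unfolding CV_def force_def
  apply (simp add: cv_scaleR cv_sum sum_distrib_left cv_diff norm_cv[symmetric] mult.assoc del: of_real_divide of_real_mult)
  apply (rule sum.cong, simp)
  apply (simp only: mult.assoc[symmetric] of_real_mult[symmetric])
  apply simp
  done

lemma lin_indep:
  fixes \<alpha> \<beta> :: real
  assumes "of_real \<alpha> * X + of_real \<beta> * Y = 0" "Im (cnj X * Y) \<noteq> 0"
  shows "\<alpha> = 0 \<and> \<beta> = 0"
proof -
  have "cnj X * (of_real \<alpha> * X + of_real \<beta> * Y) = 0" using assms(1) by simp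
  then have "of_real (\<alpha> * (cmod X)^2) + of_real \<beta> * (cnj X * Y) = 0"
    using cns[of X] by (simp add: algebra_simps)
  then have "Im (of_real (\<alpha> * (cmod X)^2) + of_real \<beta> * (cnj X * Y)) = 0" by simp
  then have "\<beta> * Im (cnj X * Y) = 0" by simp
  then have b: "\<beta> = 0" using assms(2) by simp
  have "X \<noteq> 0" using assms(2) by auto
  then have "\<alpha> = 0" using assms(1) b by simp
  then show ?thesis using b by simp
qed

lemma vertex_gen:
  fixes c1 c2 l m1 m2 m3 MM X Y :: complex
  assumes "MM \<noteq> 0" "c1 * X + c2 * Y = - l * ((m2 * (- X) + m3 * (- Y)) / MM)"
  shows "(c1 - l * m2 / MM) * X + (c2 - l * m3 / MM) * Y = 0"
proof -
  have "c1 * X + c2 * Y = l * (m2 * X + m3 * Y) / MM" using assms(2) by (simp add: algebra_simps)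
  then have "(c1 * X + c2 * Y) * MM = l * (m2 * X + m3 * Y)" using assms(1) by (simp add: field_simps)
  then have "((c1 - l * m2 / MM) * X + (c2 - l * m3 / MM) * Y) * MM = 0"
    using assms(1) by (simp add: algebra_simps diff_divide_distrib)
  then show ?thesis using assms(1) by simp
qed

lemma vertex:
  fixes cj ck lam mi mj mk :: real
  assumes "mi + mj + mk \<noteq> 0" "Im (cnj (Aj - Ai) * (Ak - Ai)) \<noteq> 0"
    and "of_real cj * (Aj - Ai) + of_real ck * (Ak - Ai) = - of_real lam * (Ai - (of_real mi * Ai + of_real mj * Aj + of_real mk * Ak) / of_real (mi + mj + mk))"
  shows "cj = lam * mj / (mi + mj + mk) \<and> ck = lam * mk / (mi + mj + mk)"
proof -
  define MM where "MM = complex_of_real (mi + mj + mk)"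
  have M: "MM \<noteq> 0" using assms(1) of_real_eq_0_iff unfolding MM_def by blast
  have e1: "Ai - (of_real mi * Ai + of_real mj * Aj + of_real mk * Ak) / MM = (of_real mj * (- (Aj - Ai)) + of_real mk * (- (Ak - Ai))) / MM"
  proof -
    have "Ai = of_real (mi + mj + mk) * Ai / MM" using M unfolding MM_def by simp
    also have "\<dots> = (of_real mi * Ai + of_real mj * Ai + of_real mk * Ai) / MM" by (simp add: algebra_simps)
    finally have "Ai - (of_real mi * Ai + of_real mj * Aj + of_real mk * Ak) / MM =
        (of_real mi * Ai + of_real mj * Ai + of_real mk * Ai) / MM - (of_real mi * Ai + of_real mj * Aj + of_real mk * Ak) / MM"
      by simp
    also have "\<dots> = (of_real mj * (- (Aj - Ai)) + of_real mk * (- (Ak - Ai))) / MM"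
      unfolding diff_divide_distrib[symmetric] by (simp add: algebra_simps)
    finally show ?thesis .
  qed
  have "(of_real cj - of_real lam * of_real mj / MM) * (Aj - Ai) + (of_real ck - of_real lam * of_real mk / MM) * (Ak - Ai) = 0"
    by (rule vertex_gen[OF M]) (use assms(3) e1 in \<open>simp add: MM_def\<close>)
  then have "of_real (cj - lam * mj / (mi + mj + mk)) * (Aj - Ai) + of_real (ck - lam * mk / (mi + mj + mk)) * (Ak - Ai) = 0"
    unfolding MM_def by simp
  from lin_indep[OF this assms(2)] show ?thesis by simp
qed


lemma noncol_im:
  fixes a :: conf
  assumes "\<not> collinear {a$1, a$2, a$3}"
  shows "Im (cnj (CV a 1 - CV a 2) * (CV a 3 - CV a 2)) \<noteq> 0"
proof
  assume im: "Im (cnj (CV a 1 - CV a 2) * (CV a 3 - CV a 2)) = 0"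
  define X where "X = CV a 1 - CV a 2"
  define Y where "Y = CV a 3 - CV a 2"
  have "collinear {0, a$1 - a$2, a$3 - a$2}"
  proof (cases "a$1 - a$2 = 0")
    case True then show ?thesis by (simp add: collinear_lemma)
  next
    case False
    then have Xnz: "X \<noteq> 0" unfolding X_def CV_def by (metis cv_diff cv_zero cv_eq_iff)
    have r: "cnj X * Y = of_real (Re (cnj X * Y))" using im unfolding X_def Y_def by (simp add: complex_eq_iff)
    have "of_real ((cmod X)^2) * Y = X * (cnj X * Y)" unfolding complex_norm_square by (simp add: mult.assoc)
    also have "\<dots> = X * of_real (Re (cnj X * Y))" using r by (metis (no_types))
    finally have "of_real ((cmod X)^2) * Y = of_real (Re (cnj X * Y)) * X" by (simp only: mult.commute)
    then have Ye: "Y = of_real (Re (cnj X * Y) / (cmod X)^2) * X" using Xnz by (simp add: field_simps)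
    have cx: "cv (a$1 - a$2) = X" unfolding X_def CV_def cv_diff ..
    have cy: "cv (a$3 - a$2) = Y" unfolding Y_def CV_def cv_diff ..
    have "cv (a$3 - a$2) = cv ((Re (cnj X * Y) / (cmod X)^2) *\<^sub>R (a$1 - a$2))"
      unfolding cv_scaleR cx cy by (rule Ye)
    then have "a$3 - a$2 = (Re (cnj X * Y) / (cmod X)^2) *\<^sub>R (a$1 - a$2)" by (simp add: cv_eq_iff)
    then show ?thesis unfolding collinear_lemma by blast
  qed
  then have "collinear {a$1, a$2, a$3}" by (subst collinear_3) auto
  then show False using assms by simp
qed

lemma cv_minus: "cv (- x) = - cv x" unfolding cv_def by (simp add: complex_eq_iff)

lemma pair_k:
  fixes k mi mj lam M :: real
  assumes "mi \<noteq> 0" "Aj \<noteq> Ai" "1 / mi * (k / cmod (Aj - Ai) ^ 3) = lam * mj / M"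
  shows "k = mi * mj * (lam / M) * cmod (Aj - Ai) ^ 3"
proof -
  have "cmod (Aj - Ai) \<noteq> 0" using assms(2) by simp
  then show ?thesis using assms(1,3) by (simp add: field_simps)
qed

lemma cc_kappa:
  fixes m e :: "real^3" and a :: conf
  assumes m: "\<forall>i. m$i > 0" and dp: "\<forall>i j. i \<noteq> j \<longrightarrow> delta m e i j > 0"
    and cc: "central_config m e a" and nc: "\<not> collinear {a$1, a$2, a$3}"
  shows "\<exists>\<kappa>>0. kap_hyp m e (CV a) \<kappa>"
proof -
  define A where "A = CV a"
  obtain lam where lam: "\<forall>i. force m e a $ i = (- lam) *\<^sub>R (a$i - center_of_mass m a)"
    using cc unfolding central_config_def by blast
  define M where "M = m$1 + m$2 + m$3"
  have Mpos: "M > 0" using m unfolding M_def by (simp add: add_pos_pos)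
  have C: "cv (center_of_mass m a) = (of_real (m$1) * A 1 + of_real (m$2) * A 2 + of_real (m$3) * A 3) / of_real M"
    unfolding center_of_mass_def A_def CV_def M_def by (simp add: cv_scaleR cv_add sum_3 divide_inverse mult.commute)
  define c where "c i j = 1 / m$i * ((m$i * m$j - e$i * e$j) / cmod (A j - A i) ^ 3)" for i j
  have F: "CV (force m e a) i = - of_real lam * (A i - cv (center_of_mass m a))" for i
    unfolding CV_def using lam by (simp add: cv_scaleR cv_diff cv_minus A_def CV_def)
  have im: "Im (cnj (A 1 - A 2) * (A 3 - A 2)) \<noteq> 0" using noncol_im[OF nc] unfolding A_def .
  have im1: "Im (cnj (A 2 - A 1) * (A 3 - A 1)) \<noteq> 0" using im by (simp add: algebra_simps)
  have im3: "Im (cnj (A 1 - A 3) * (A 2 - A 3)) \<noteq> 0" using im by (simp add: algebra_simps)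
  have Mnz: "m$1 + m$2 + m$3 \<noteq> 0" using Mpos unfolding M_def by simp
  have v1: "c 1 2 = lam * m$2 / M \<and> c 1 3 = lam * m$3 / M"
  proof -
    have "of_real (c 1 2) * (A 2 - A 1) + of_real (c 1 3) * (A 3 - A 1) = - of_real lam * (A 1 - (of_real (m$1) * A 1 + of_real (m$2) * A 2 + of_real (m$3) * A 3) / of_real (m$1 + m$2 + m$3))"
      using F[of 1] unfolding CV_force sum_minus_1 C c_def A_def M_def by simp
    from vertex[OF Mnz im1 this] show ?thesis unfolding M_def .
  qed
  have v2: "c 2 1 = lam * m$1 / M \<and> c 2 3 = lam * m$3 / M"
  proof -
    have e: "m$2 + m$1 + m$3 = M" unfolding M_def by simp
    have "of_real (c 2 1) * (A 1 - A 2) + of_real (c 2 3) * (A 3 - A 2) = - of_real lam * (A 2 - (of_real (m$2) * A 2 + of_real (m$1) * A 1 + of_real (m$3) * A 3) / of_real (m$2 + m$1 + m$3))"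
      using F[of 2] unfolding CV_force sum_minus_2 C c_def A_def M_def by (simp add: algebra_simps)
    from vertex[OF _ im this] show ?thesis unfolding e using Mpos by simp
  qed
  have v3: "c 3 1 = lam * m$1 / M \<and> c 3 2 = lam * m$2 / M"
  proof -
    have e: "m$3 + m$1 + m$2 = M" unfolding M_def by simp
    have "of_real (c 3 1) * (A 1 - A 3) + of_real (c 3 2) * (A 2 - A 3) = - of_real lam * (A 3 - (of_real (m$3) * A 3 + of_real (m$1) * A 1 + of_real (m$2) * A 2) / of_real (m$3 + m$1 + m$2))"
      using F[of 3] unfolding CV_force sum_minus_3 C c_def A_def M_def by (simp add: algebra_simps)
    from vertex[OF _ im3 this] show ?thesis unfolding e using Mpos by simp
  qed
  have dA: "A 1 \<noteq> A 2" "A 2 \<noteq> A 3" "A 1 \<noteq> A 3" using im im1 im3 by auto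
  have mnz: "m$i \<noteq> 0" for i using m by (metis less_irrefl)
  have kh: "kap_hyp m e A (lam / M)"
    unfolding kap_hyp_def
  proof (intro allI impI)
    fix i j :: 3 assume ij: "i \<noteq> j"
    have all: "\<And>i j. c i j = lam * m$j / M \<Longrightarrow> A j \<noteq> A i \<Longrightarrow>
        m$i * m$j - e$i * e$j = m$i * m$j * (lam / M) * cmod (A j - A i) ^ 3"
      unfolding c_def by (rule pair_k[OF mnz])
    have cij: "c i j = lam * m$j / M" using exhaust_3[of i] exhaust_3[of j] ij v1 v2 v3
      by (elim disjE) auto
    have aij: "A j \<noteq> A i" using exhaust_3[of i] exhaust_3[of j] ij dA
      by (elim disjE) auto
    show "m$i * m$j - e$i * e$j = m$i * m$j * (lam / M) * cmod (A j - A i) ^ 3"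
      by (rule all[OF cij aij])
  qed
  have "m$1 * m$2 - e$1 * e$2 > 0"
  proof -
    have "delta m e 1 2 > 0" using dp t3 by blast
    then have "m$1 * m$2 * delta m e 1 2 > 0" using m by simp
    moreover have "m$1 * m$2 * delta m e 1 2 = m$1 * m$2 - e$1 * e$2"
      unfolding delta_def using mnz[of 1] mnz[of 2] by (simp add: field_simps)
    ultimately show ?thesis by simp
  qed
  moreover have "m$1 * m$2 - e$1 * e$2 = m$1 * m$2 * (lam / M) * cmod (A 2 - A 1) ^ 3"
    using kh t3 unfolding kap_hyp_def by blast
  ultimately have "m$1 * m$2 * (lam / M) * cmod (A 2 - A 1) ^ 3 > 0" by simp
  moreover have "m$1 * m$2 * cmod (A 2 - A 1) ^ 3 > 0" using m dA by simp
  ultimately have "lam / M > 0" by (metis mult.commute mult.left_commute zero_less_mult_pos)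
  then show ?thesis using kh unfolding A_def by blast
qed


definition w6 :: complex where "w6 = Complex (1/2) (sqrt 3 / 2)"
definition peq :: "real \<Rightarrow> cc" where
  "peq s = (\<lambda>i. if i = 1 then 0 else if i = 2 then of_real s else of_real s * w6)"
definition meq :: "real \<Rightarrow> real \<Rightarrow> (3 \<Rightarrow> real)" where
  "meq M x = (\<lambda>i. if i = 3 then M * x / (2 + x) else M / (2 + x))"

lemma peq_simps: "peq s 1 = 0" "peq s 2 = of_real s" "peq s 3 = of_real s * w6"
  unfolding peq_def using t3 by auto
lemma meq_simps: "meq M x 1 = M / (2 + x)" "meq M x 2 = M / (2 + x)" "meq M x 3 = M * x / (2 + x)"
  unfolding meq_def using t3 by auto

lemma s3: "sqrt 3 * sqrt 3 = (3::real)" by simp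

lemma w6_props: "cmod (w6 - 1) = 1" "cmod w6 = 1" "w6 \<noteq> 0" "w6 \<noteq> 1"
  unfolding w6_def cmod_def by (simp_all add: power2_eq_square s3 complex_eq_iff)

lemma uu_scale: "s > 0 \<Longrightarrow> uu (of_real s * w) = uu w"
  unfolding uu_def by (cases "w = 0") (simp_all add: field_simps)

lemma uu_w1: "uu (w6 - 1) = Complex (-1/2) (- sqrt 3 / 2)"
  unfolding uu_def w6_def by (simp add: complex_eq_iff Re_divide Im_divide power2_eq_square s3 field_simps)
lemma uu_w2: "uu (- w6) = Complex (-1/2) (sqrt 3 / 2)"
  unfolding uu_def w6_def by (simp add: complex_eq_iff Re_divide Im_divide power2_eq_square s3 field_simps)
lemma uu_1: "uu 1 = 1" unfolding uu_def by simp

lemma tri_peq: assumes "s > 0" "M > 0" "x > 0" shows "tri (meq M x) (peq s)"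
  unfolding tri_def meq_def peq_def using assms t3 w6_props by (auto simp: add_pos_pos)

lemma Msum_meq: "x > 0 \<Longrightarrow> Msum (meq M x) = M"
proof -
  assume "x > 0"
  then have "2 + x \<noteq> 0" by simp
  have "M / (2 + x) + M / (2 + x) + M * x / (2 + x) = (M * (2 + x)) / (2 + x)"
    by (simp add: add_divide_distrib[symmetric] algebra_simps)
  then show ?thesis unfolding Msum_def meq_simps using \<open>2 + x \<noteq> 0\<close> by simp
qed

lemma tri_atc: "tri mm a \<Longrightarrow> tri mm (atc mm a)"
  unfolding tri_def atc_def by auto

lemma sK_transl: "sK mm (atc mm' a) = sK mm a"
  unfolding sK_def SK_def atc_def by simp

lemma cmod_sK_eq:
  assumes "s > 0" "M > 0" "x \<ge> 1"
  shows "cmod (sK (meq M x) (peq s)) = M * (x - 1) / (2 + x)"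
proof -
  have t: "tri (meq M x) (peq s)" by (rule tri_peq) (use assms in auto)
  have e1: "peq s 3 - peq s 2 = of_real s * (w6 - 1)" unfolding peq_simps by (simp add: algebra_simps)
  have e2: "peq s 1 - peq s 3 = of_real s * (- w6)" unfolding peq_simps by simp
  have e3: "peq s 2 - peq s 1 = of_real s * 1" unfolding peq_simps by simp
  have "of_real (meq M x 1) * uu (peq s 3 - peq s 2) + of_real (meq M x 2) * uu (peq s 1 - peq s 3) + of_real (meq M x 3) * uu (peq s 2 - peq s 1)
     = of_real (M * (x - 1) / (2 + x))"
  proof -
    define c where "c = M / (2 + x)"
    have c3: "M * x / (2 + x) = c * x" unfolding c_def by simp
    have cc: "M * (x - 1) / (2 + x) = c * (x - 1)" unfolding c_def by simp
    show ?thesis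
      unfolding e1 e2 e3 uu_scale[OF assms(1)] uu_w1 uu_w2 uu_1 meq_simps c3 cc c_def[symmetric]
      by (simp add: complex_eq_iff algebra_simps)
  qed
  then have "cmod (sK (meq M x) (peq s)) = cmod (complex_of_real (M * (x - 1) / (2 + x)))"
    unfolding cmod_sK[OF t] by (rule arg_cong)
  also have "\<dots> = M * (x - 1) / (2 + x)" using assms by (simp only: norm_of_real) simp
  finally show ?thesis .
qed

lemma exists_tt: assumes "cmod s1 = cmod s2" shows "\<exists>tt. tt \<noteq> 0 \<and> tt * s1 = cnj tt * s2"
proof (cases "s1 = 0")
  case True then have "s2 = 0" using assms by simp
  then show ?thesis using True by (intro exI[of _ 1]) simp
next
  case False
  then have s2: "s2 \<noteq> 0" using assms by auto
  define tt where "tt = csqrt (s2 * cnj s1)"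
  have tt2: "tt^2 = s2 * cnj s1" unfolding tt_def by simp
  have ttnz: "tt \<noteq> 0" using tt2 False s2 by auto
  have "cmod tt ^ 2 = cmod (tt^2)" by (simp add: norm_power)
  also have "\<dots> = cmod s1 ^ 2" unfolding tt2 using assms by (simp add: norm_mult power2_eq_square)
  finally have ntt: "tt * cnj tt = s1 * cnj s1" using cns[of tt] cns[of s1] by (metis of_real_power)
  have "tt * (tt * s1) = tt * (cnj tt * s2)"
  proof -
    have "tt * (tt * s1) = s2 * (s1 * cnj s1)" using tt2 by (simp add: power2_eq_square algebra_simps)
    also have "\<dots> = tt * (cnj tt * s2)" using ntt by (simp add: algebra_simps)
    finally show ?thesis .
  qed
  then have "tt * s1 = cnj tt * s2" using ttnz by simp
  then show ?thesis using ttnz by blast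
qed


lemma CV_add: "CV (x + y) = (\<lambda>i. CV x i + CV y i)" unfolding CV_def by (simp add: cv_add)
lemma CV_scaleR: "CV (c *\<^sub>R x) = (\<lambda>i. of_real c * CV x i)" unfolding CV_def by (simp add: cv_scaleR)
lemma VC_add: "VC (\<lambda>i. X i + Y i) = VC X + VC Y" by (rule CV_inj) (simp add: CV_add)
lemma VC_scale: "VC (\<lambda>i. of_real c * X i) = c *\<^sub>R VC X" by (rule CV_inj) (simp add: CV_scaleR)

lemma linear_VAC:
  assumes "\<And>X Y. F (\<lambda>i. X i + Y i) = (\<lambda>i. F X i + F Y i)"
    and "\<And>c X. F (\<lambda>i. of_real c * X i) = (\<lambda>i. of_real c * F X i)"
  shows "linear (\<lambda>x. VC (F (CV x)))"
  by (rule linearI) (simp_all add: CV_add CV_scaleR assms VC_add VC_scale)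

lemma linear_pair:
  assumes "linear f"
  shows "linear (\<lambda>p. (f (fst p), f (snd p)))"
  using assms by (intro linearI) (simp_all add: linear_add linear_scale)

lemma opL_transl: "opL mm (atc mm' a) = opL mm a"
  unfolding opL_def atc_def by simp

lemma dist_peq: assumes "s > 0" "i \<noteq> j" shows "cmod (peq s j - peq s i) = s"
proof -
  have a: "cmod (of_real s * w6 - of_real s) = s"
  proof -
    have "of_real s * w6 - of_real s = of_real s * (w6 - 1)" by (simp add: algebra_simps)
    then show ?thesis using w6_props assms(1) by (simp add: norm_mult)
  qed
  have b: "cmod (of_real s - of_real s * w6) = s"
    using a by (metis norm_minus_commute)
  have c: "cmod (of_real s * w6) = s" using w6_props assms(1) by (simp add: norm_mult)
  show ?thesis using exhaust_3[of i] exhaust_3[of j] assms(2) a b c assms(1)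
    by (elim disjE) (auto simp: peq_simps norm_minus_commute)
qed

lemma atc_diff: "atc mm a j - atc mm a i = a j - a i" unfolding atc_def by simp

lemma CV_rot: "CV (\<chi> i. r *\<^sub>R rot th (a$i)) = (\<lambda>i. (of_real r * cis th) * CV a i)"
  unfolding CV_def by (simp add: cv_scaleR cv_rot mult.assoc)

lemma q_eq: "(\<chi> i. r *\<^sub>R rot th (a$i)) = VC (\<lambda>i. (of_real r * cis th) * CV a i)"
  by (rule CV_inj) (simp add: CV_rot)


lemma norm_vc_diff: "norm (vc X - vc Y) = cmod (X - Y)"
  by (metis cv_diff cv_vc norm_cv)

lemma scaled_distinct:
  assumes "z \<noteq> 0" "\<forall>i j. i \<noteq> j \<longrightarrow> X i \<noteq> X j"
  shows "\<forall>i j. i \<noteq> j \<longrightarrow> VC (\<lambda>i. z * X i) $ i \<noteq> VC (\<lambda>i. z * X i) $ j"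
proof (intro allI impI)
  fix i j :: 3 assume "i \<noteq> j"
  then have "z * X i \<noteq> z * X j" using assms by simp
  then show "VC (\<lambda>i. z * X i) $ i \<noteq> VC (\<lambda>i. z * X i) $ j" unfolding VC_def by (metis cv_vc vec_lambda_beta)
qed

lemma tri_dist: "tri mm X \<Longrightarrow> \<forall>i j. i \<noteq> j \<longrightarrow> X i \<noteq> X j"
proof (intro allI impI)
  fix i j :: 3 assume "tri mm X" "i \<noteq> j"
  then show "X i \<noteq> X j" unfolding tri_def using exhaust_3[of i] exhaust_3[of j] by (elim disjE) auto
qed


theorem theorem1p1:
  fixes m e :: "real^3" and a :: conf and r th :: "real \<Rightarrow> real" and ecc :: real
  assumes mpos: "\<forall>i. m$i > 0"
    and delta_pos: "\<forall>i j. i \<noteq> j \<longrightarrow> delta m e i j > 0"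
    and cc: "central_config m e a"
    and noncol: "\<not> collinear {a$1, a$2, a$3}"
    and rpos: "\<forall>t. r t > 0"
    and kep: "kepler_orbit (\<lambda>t. vector [r t * cos (th t), r t * sin (th t)]) ecc"
    and ecc: "0 \<le> ecc" "ecc < 1"
    and sol: "is_solution m e (\<lambda>t. \<chi> i. r t *\<^sub>R rot (th t) (a$i))"
  shows "0 \<le> beta m a \<and> beta m a \<le> 9 \<and>
    (\<exists>m' :: real^3. \<exists>a' :: conf. \<exists>P :: real \<Rightarrow> conf \<times> conf \<Rightarrow> conf \<times> conf.
       (\<forall>i. m'$i > 0) \<and> equilateral a' \<and> beta m' a' = beta m a \<and>
       is_solution m' 0 (\<lambda>t. \<chi> i. r t *\<^sub>R rot (th t) (a'$i)) \<and>
       (\<forall>t. linear (P t) \<and> bij (P t)) \<and>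
       (\<forall>T. (\<forall>t. vector [r (t + T) * cos (th (t + T)), r (t + T) * sin (th (t + T))]
                  = (vector [r t * cos (th t), r t * sin (th t)] :: real^2))
            \<longrightarrow> (\<forall>t. P (t + T) = P t)) \<and>
       (\<forall>Y. lin_solution m e (\<lambda>t. \<chi> i. r t *\<^sub>R rot (th t) (a$i)) Y \<longleftrightarrow>
            lin_solution m' 0 (\<lambda>t. \<chi> i. r t *\<^sub>R rot (th t) (a'$i)) (\<lambda>t. P t (Y t))))"
proof -
  define mm where "mm = (\<lambda>i. m$i)"
  define A where "A = CV a"
  define M where "M = Msum mm"
  obtain \<kappa> where kpos: "\<kappa> > 0" and kh: "kap_hyp m e A \<kappa>"
    using cc_kappa[OF mpos delta_pos cc noncol] unfolding A_def by blast
  have im: "Im (cnj (A 1 - A 2) * (A 3 - A 2)) \<noteq> 0" using noncol_im[OF noncol] unfolding A_def .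
  have dA: "A 1 \<noteq> A 2" "A 2 \<noteq> A 3" "A 1 \<noteq> A 3"
  proof -
    show "A 1 \<noteq> A 2" using im by auto
    show "A 2 \<noteq> A 3" using im by auto
    show "A 1 \<noteq> A 3"
    proof
      assume "A 1 = A 3"
      then have "Im (cnj (A 1 - A 2) * (A 3 - A 2)) = 0" by (simp add: algebra_simps)
      then show False using im by simp
    qed
  qed
  have tA: "tri mm A" unfolding tri_def mm_def using mpos dA by auto
  have Mpos: "M > 0" using tri_M(1)[OF tA] unfolding M_def .
  define sA where "sA = cmod (sK mm A)"
  have sA0: "sA \<ge> 0" unfolding sA_def by simp
  have tA0: "tri (\<lambda>i. m$i) (CV a)" using tA unfolding mm_def A_def .
  have beq: "beta m a = 9 * (M^2 - sA^2) / M^2"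
    using beta_sK[OF tA0] unfolding sA_def M_def mm_def A_def .
  have bform: "beta m a = 36 * (m$1 * m$2 * sfun (A 3 - A 2) (A 1 - A 3) + m$1 * m$3 * sfun (A 3 - A 2) (A 2 - A 1)
       + m$2 * m$3 * sfun (A 1 - A 3) (A 2 - A 1)) / (m$1 + m$2 + m$3)^2"
    using beta_eq[OF tA0] unfolding A_def .
  have mp: "m$1 > 0" "m$2 > 0" "m$3 > 0" using mpos by auto
  have bnn: "0 \<le> beta m a" unfolding bform using mp sfun_nonneg
    by (intro divide_nonneg_pos mult_nonneg_nonneg add_nonneg_nonneg) (auto simp: less_imp_le)
  have bpos: "beta m a > 0"
  proof -
    have "Im (cnj (A 3 - A 2) * (A 1 - A 3)) \<noteq> 0" using im by (simp add: algebra_simps)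
    then have "sfun (A 3 - A 2) (A 1 - A 3) > 0" by (rule sfun_pos)
    then have "m$1 * m$2 * sfun (A 3 - A 2) (A 1 - A 3) > 0" using mpos by simp
    moreover have "m$1 * m$3 * sfun (A 3 - A 2) (A 2 - A 1) \<ge> 0" "m$2 * m$3 * sfun (A 1 - A 3) (A 2 - A 1) \<ge> 0"
      using mpos sfun_nonneg by (simp_all add: less_imp_le)
    moreover have "(m$1 + m$2 + m$3)^2 > 0" using mp by (intro zero_less_power) linarith
    ultimately show ?thesis unfolding bform by (intro divide_pos_pos) auto
  qed
  have b9: "beta m a \<le> 9"
  proof -
    have "9 * (M^2 - sA^2) / M^2 \<le> 9 * M^2 / M^2" by (intro divide_right_mono) simp_all
    also have "\<dots> = 9" using Mpos by simp
    finally show ?thesis unfolding beq .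
  qed
  have sAlt: "sA < M"
  proof -
    have h: "0 < 9 * (M^2 - sA^2) / M^2" using bpos beq by linarith
    have M2: "0 < M^2" using Mpos by simp
    have e: "9 * (M^2 - sA^2) = (9 * (M^2 - sA^2) / M^2) * M^2" using M2 by simp
    have "0 < 9 * (M^2 - sA^2)" by (subst e) (rule mult_pos_pos[OF h M2])
    then have "0 < M^2 - sA^2" using zero_less_mult_iff[of 9 "M^2 - sA^2"] by linarith
    then have "sA^2 < M^2" by (metis diff_gt_0_iff_gt)
    then show ?thesis using power2_less_imp_less[of sA M] Mpos by linarith
  qed
  define \<rho> where "\<rho> = sA / M"
  have r0: "0 \<le> \<rho>" unfolding \<rho>_def using sA0 Mpos by simp
  have r1: "\<rho> < 1" unfolding \<rho>_def using sAlt Mpos by simp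
  define x where "x = (1 + 2 * \<rho>) / (1 - \<rho>)"
  have x1: "x \<ge> 1" unfolding x_def using r0 r1 by (simp add: field_simps)
  have xpos: "x > 0" using x1 by simp
  have xr: "M * (x - 1) / (2 + x) = sA"
  proof -
    have a1: "x - 1 = 3 * \<rho> / (1 - \<rho>)" unfolding x_def using r1 by (simp add: field_simps)
    have a2: "2 + x = 3 / (1 - \<rho>)" unfolding x_def using r1 by (simp add: field_simps)
    have "M * (x - 1) / (2 + x) = M * \<rho>" unfolding a1 a2 using r1 by (simp add: field_simps)
    then show ?thesis unfolding \<rho>_def using Mpos by simp
  qed
  define s where "s = root 3 (1 / \<kappa>)"
  have spos: "s > 0" unfolding s_def using kpos by simp
  have ks: "\<kappa> * s ^ 3 = 1" unfolding s_def using kpos by simp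
  define mm' where "mm' = meq M x"
  define m' :: "real^3" where "m' = (\<chi> i. mm' i)"
  have mm'_eq: "(\<lambda>i. m'$i) = mm'" unfolding m'_def by simp
  define A' where "A' = atc mm' (peq s)"
  define a' where "a' = VC A'"
  have CVa': "CV a' = A'" unfolding a'_def by simp
  have tp: "tri mm' (peq s)" unfolding mm'_def by (rule tri_peq) (use spos Mpos xpos in auto)
  have tA': "tri mm' A'" unfolding A'_def by (rule tri_atc[OF tp])
  have M': "Msum mm' = M" unfolding mm'_def by (rule Msum_meq[OF xpos])
  have sK': "cmod (sK mm' A') = sA"
    unfolding A'_def sK_transl mm'_def using cmod_sK_eq[OF spos Mpos x1] xr by simp
  have beta': "beta m' a' = beta m a"
  proof -
    have "tri (\<lambda>i. m'$i) (CV a')" unfolding mm'_eq CVa' by (rule tA')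
    from beta_sK[OF this] show ?thesis unfolding mm'_eq CVa' M' sK' beq .
  qed
  have m'pos: "\<forall>i. m'$i > 0" using tA' unfolding tri_def mm'_eq[symmetric] by simp
  have dA': "cmod (A' j - A' i) = s" if "i \<noteq> j" for i j
    unfolding A'_def atc_diff by (rule dist_peq[OF spos that])
  have equi: "equilateral a'"
  proof -
    have n: "norm (a'$i - a'$j) = s" if "i \<noteq> j" for i j
      unfolding a'_def VC_def using dA'[of j i] that by (simp add: norm_vc_diff)
    show ?thesis unfolding equilateral_def using n[of 1 2] n[of 2 3] n[of 3 1] t3 spos by auto
  qed
  have kh': "kap_hyp m' 0 A' \<kappa>"
    unfolding kap_hyp_def
  proof (intro allI impI)
    fix i j :: 3 assume "i \<noteq> j"
    then have "cmod (A' j - A' i) ^ 3 = s ^ 3" using dA' by simp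
    then show "m'$i * m'$j - 0$i * 0$j = m'$i * m'$j * \<kappa> * cmod (A' j - A' i) ^ 3"
      using ks by (simp add: mult.assoc)
  qed
  obtain tt where tt: "tt \<noteq> 0" "tt * sK mm A = cnj tt * sK mm' A'"
    using exists_tt[of "sK mm A" "sK mm' A'"] sK' unfolding sA_def by auto
  define Ar where "Ar \<xi> = VC (Amap mm A mm' A' tt (CV \<xi>))" for \<xi>
  define Ai where "Ai \<xi> = VC (Amap mm' A' mm A (1/tt) (CV \<xi>))" for \<xi>
  define PP where "PP = (\<lambda>p::conf \<times> conf. (Ar (fst p), Ar (snd p)))"
  define QQ where "QQ = (\<lambda>p::conf \<times> conf. (Ai (fst p), Ai (snd p)))"
  define P where "P = (\<lambda>t::real. PP)"
  have linAr: "linear Ar" unfolding Ar_def by (rule linear_VAC) (simp_all add: Amap_add Amap_scale)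
  have linAi: "linear Ai" unfolding Ai_def by (rule linear_VAC) (simp_all add: Amap_add Amap_scale)
  have AiAr: "Ai (Ar \<xi>) = \<xi>" for \<xi>
    unfolding Ai_def Ar_def using Amap_inv[OF tA tA' tt(1)] by simp
  have ArAi: "Ar (Ai \<xi>) = \<xi>" for \<xi>
  proof -
    have "1 / tt \<noteq> 0" using tt(1) by simp
    from Amap_inv[OF tA' tA this] show ?thesis unfolding Ai_def Ar_def by simp
  qed
  have linPP: "linear PP" unfolding PP_def by (rule linear_pair[OF linAr])
  have linQQ: "linear QQ" unfolding QQ_def by (rule linear_pair[OF linAi])
  have QP: "QQ (PP p) = p" for p unfolding QQ_def PP_def by (simp add: AiAr)
  have PQ: "PP (QQ p) = p" for p unfolding QQ_def PP_def by (simp add: ArAi)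
  have bijPP: "bij PP" by (rule o_bij[of QQ]) (auto simp: fun_eq_iff QP PQ)
  have blPP: "bounded_linear PP" using linPP linear_conv_bounded_linear by blast
  have blQQ: "bounded_linear QQ" using linQQ linear_conv_bounded_linear by blast
  define z where "z t = complex_of_real (r t) * cis (th t)" for t
  have znz: "z t \<noteq> 0" for t
  proof -
    have "r t \<noteq> 0" using rpos by (metis less_irrefl)
    then show ?thesis unfolding z_def by simp
  qed
  define q where "q t = (\<chi> i. r t *\<^sub>R rot (th t) (a$i))" for t
  define q' where "q' t = (\<chi> i. r t *\<^sub>R rot (th t) (a'$i))" for t
  have qz: "q t = VC (\<lambda>i. z t * A i)" for t unfolding q_def z_def A_def by (rule q_eq)
  have qz': "q' t = VC (\<lambda>i. z t * A' i)" for t unfolding q'_def z_def CVa'[symmetric] by (rule q_eq)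
  have DFq: "frechet_derivative (force m e) (at (q t)) = DFr m e (q t)" for t
    unfolding qz by (rule frechet_derivative_at[symmetric], rule force_deriv, rule scaled_distinct[OF znz tri_dist[OF tA]])
  have DFq': "frechet_derivative (force m' 0) (at (q' t)) = DFr m' 0 (q' t)" for t
    unfolding qz' by (rule frechet_derivative_at[symmetric], rule force_deriv, rule scaled_distinct[OF znz tri_dist[OF tA']])
  have inter: "Ar (DFr m e (q t) \<xi>) = DFr m' 0 (q' t) (Ar \<xi>)" for t \<xi>
  proof -
    have "CV (Ar (DFr m e (q t) \<xi>)) = Amap mm A mm' A' tt (\<lambda>i. of_real (\<kappa> / cmod (z t) ^ 3) * op mm A (z t / cnj (z t)) (CV \<xi>) i)"
      unfolding Ar_def qz CV_VC DFr_scaled[OF znz mpos kh tri_dist[OF tA]] mm_def ..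
    also have "\<dots> = (\<lambda>i. of_real (\<kappa> / cmod (z t) ^ 3) * op mm' A' (z t / cnj (z t)) (Amap mm A mm' A' tt (CV \<xi>)) i)"
      unfolding Amap_scale intertwine[OF tA tA' M'[unfolded M_def] tt(2)] ..
    also have "\<dots> = CV (DFr m' 0 (q' t) (Ar \<xi>))"
      unfolding qz' Ar_def DFr_scaled[OF znz m'pos kh' tri_dist[OF tA']] mm'_eq CV_VC ..
    finally show ?thesis by (rule CV_inj)
  qed
  define K where "K i = A' i / (A 1 - A 2)" for i
  define \<Phi> where "\<Phi> x = VC (\<lambda>i. (CV x 1 - CV x 2) * K i)" for x
  have lin\<Phi>: "linear \<Phi>" unfolding \<Phi>_def by (rule linear_VAC) (simp_all add: fun_eq_iff algebra_simps)
  have bl\<Phi>: "bounded_linear \<Phi>" using lin\<Phi> linear_conv_bounded_linear by blast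
  have dA12: "A 1 - A 2 \<noteq> 0" using dA by simp
  have qq': "q' t = \<Phi> (q t)" for t
  proof -
    have "(z t * A 1 - z t * A 2) * (A' i / (A 1 - A 2)) = z t * A' i" for i
      using dA12 by (simp add: field_simps)
    then show ?thesis unfolding \<Phi>_def qz qz' CV_VC K_def by simp
  qed
  have opLA: "opL mm A i = - of_real M * atc mm A i" for i
    unfolding opL_transl[of mm mm A, symmetric] opL_at[OF tA] M_def ..
  have opLA': "opL mm' A' i = - of_real M * A' i" for i
    unfolding A'_def opL_at[OF tp] M' ..
  have feq: "\<Phi> (force m e (q t)) = force m' 0 (q' t)" for t
  proof -
    define c where "c = complex_of_real (\<kappa> / cmod (z t) ^ 3) * z t"
    have F: "CV (force m e (q t)) = (\<lambda>i. c * opL mm A i)"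
      unfolding qz c_def using force_scaled[OF znz mpos kh] unfolding mm_def by simp
    have F': "CV (force m' 0 (q' t)) = (\<lambda>i. c * opL mm' A' i)"
      unfolding qz' c_def using force_scaled[OF znz m'pos kh'] unfolding mm'_eq by simp
    have "(c * opL mm A 1 - c * opL mm A 2) * (A' i / (A 1 - A 2)) = c * opL mm' A' i" for i
    proof -
      have h1: "c * opL mm A 1 - c * opL mm A 2 = - c * of_real M * (A 1 - A 2)"
        unfolding opLA atc_def by (simp add: algebra_simps)
      show ?thesis unfolding h1 opLA' using dA12 by (simp add: field_simps)
    qed
    then have "CV (\<Phi> (force m e (q t))) = CV (force m' 0 (q' t))"
      unfolding \<Phi>_def CV_VC F F' K_def by simp
    then show ?thesis by (rule CV_inj)
  qed
  have qdef: "(\<lambda>t. \<chi> i. r t *\<^sub>R rot (th t) (a$i)) = q" unfolding q_def ..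
  have qdef': "(\<lambda>t. \<chi> i. r t *\<^sub>R rot (th t) (a'$i)) = q'" unfolding q'_def ..
  have solq': "is_solution m' 0 q'"
  proof -
    obtain v where hv: "\<forall>t. (q has_vector_derivative v t) (at t) \<and> (v has_vector_derivative force m e (q t)) (at t)"
      using sol unfolding is_solution_def qdef by blast
    have "\<forall>t. (q' has_vector_derivative \<Phi> (v t)) (at t) \<and> ((\<lambda>t. \<Phi> (v t)) has_vector_derivative force m' 0 (q' t)) (at t)"
    proof
      fix t
      have e: "q' = (\<lambda>t. \<Phi> (q t))" using qq' by (simp add: fun_eq_iff)
      have "(q' has_vector_derivative \<Phi> (v t)) (at t)"
        unfolding e by (rule bounded_linear.has_vector_derivative[OF bl\<Phi>]) (use hv in blast)
      moreover have "((\<lambda>t. \<Phi> (v t)) has_vector_derivative force m' 0 (q' t)) (at t)"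
        unfolding feq[symmetric] by (rule bounded_linear.has_vector_derivative[OF bl\<Phi>]) (use hv in blast)
      ultimately show "(q' has_vector_derivative \<Phi> (v t)) (at t) \<and> ((\<lambda>t. \<Phi> (v t)) has_vector_derivative force m' 0 (q' t)) (at t)" ..
    qed
    then show ?thesis unfolding is_solution_def by (intro exI[of _ "\<lambda>t. \<Phi> (v t)"])
  qed
  have linsol: "lin_solution m e q Y \<longleftrightarrow> lin_solution m' 0 q' (\<lambda>t. P t (Y t))" for Y
  proof -
    have eq1: "lin_solution m e q Y \<longleftrightarrow> (\<forall>t. (Y has_vector_derivative (snd (Y t), DFr m e (q t) (fst (Y t)))) (at t))"
      unfolding lin_solution_def DFq ..
    have eq2: "lin_solution m' 0 q' (\<lambda>t. P t (Y t)) \<longleftrightarrow> (\<forall>t. ((\<lambda>t. PP (Y t)) has_vector_derivative (snd (PP (Y t)), DFr m' 0 (q' t) (fst (PP (Y t))))) (at t))"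
      unfolding lin_solution_def DFq' P_def ..
    show ?thesis unfolding eq1 eq2
    proof (intro iffI allI)
      fix t
      assume h: "\<forall>t. (Y has_vector_derivative (snd (Y t), DFr m e (q t) (fst (Y t)))) (at t)"
      have "((\<lambda>t. PP (Y t)) has_vector_derivative PP (snd (Y t), DFr m e (q t) (fst (Y t)))) (at t)"
        by (rule bounded_linear.has_vector_derivative[OF blPP]) (use h in blast)
      moreover have "PP (snd (Y t), DFr m e (q t) (fst (Y t))) = (snd (PP (Y t)), DFr m' 0 (q' t) (fst (PP (Y t))))"
        unfolding PP_def by (simp add: inter)
      ultimately show "((\<lambda>t. PP (Y t)) has_vector_derivative (snd (PP (Y t)), DFr m' 0 (q' t) (fst (PP (Y t))))) (at t)" by simp
    next
      fix t
      assume h: "\<forall>t. ((\<lambda>t. PP (Y t)) has_vector_derivative (snd (PP (Y t)), DFr m' 0 (q' t) (fst (PP (Y t))))) (at t)"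
      have "((\<lambda>t. QQ (PP (Y t))) has_vector_derivative QQ (snd (PP (Y t)), DFr m' 0 (q' t) (fst (PP (Y t))))) (at t)"
        by (rule bounded_linear.has_vector_derivative[OF blQQ]) (use h in blast)
      moreover have "QQ (snd (PP (Y t)), DFr m' 0 (q' t) (fst (PP (Y t)))) = (snd (Y t), DFr m e (q t) (fst (Y t)))"
        unfolding PP_def QQ_def by (simp add: inter[symmetric] AiAr)
      moreover have "(\<lambda>t. QQ (PP (Y t))) = Y" by (simp add: QP)
      ultimately show "(Y has_vector_derivative (snd (Y t), DFr m e (q t) (fst (Y t)))) (at t)" by simp
    qed
  qed
  have main: "(\<forall>i. m'$i > 0) \<and> equilateral a' \<and> beta m' a' = beta m a \<and>
       is_solution m' 0 q' \<and>
       (\<forall>t. linear (P t) \<and> bij (P t)) \<and>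
       (\<forall>T. (\<forall>t. vector [r (t + T) * cos (th (t + T)), r (t + T) * sin (th (t + T))]
                  = (vector [r t * cos (th t), r t * sin (th t)] :: real^2))
            \<longrightarrow> (\<forall>t. P (t + T) = P t)) \<and>
       (\<forall>Y. lin_solution m e q Y \<longleftrightarrow> lin_solution m' 0 q' (\<lambda>t. P t (Y t)))"
    using m'pos equi beta' solq' linPP bijPP linsol unfolding P_def by blast
  show ?thesis unfolding qdef
    apply (rule conjI[OF bnn], rule conjI[OF b9])
    apply (rule exI[of _ m'], rule exI[of _ a'], rule exI[of _ P])
    unfolding qdef' using main by blast
qed


end
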